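(* Let $A$ be a commutative Noetherian regular ring of prime characteristic $p$, let $e\geq 1$, and let $y_1,\ldots,y_n$ be an $A$-Koszul regular sequence, $I_n=\langle y_1,\ldots,y_n\rangle$. Then the Frobenius–Koszul complex $\mathcal{FK}_\bullet(y_1,\ldots,y_n;A)$ is a finite free resolution of $A/I_n$ in the category of left $A[\Theta;F^e]$-modules.
   Context: $F:A\to A$ is the Frobenius map $a\mapsto a^p$ and $F^e$ its $e$-th iterate. The left skew polynomial ring $A[\Theta;F^e]$ is the ring which is a free left $A$-module with basis $\{\Theta^i\}_{i\geq0}$ and multiplication determined by $\Theta a=a^{p^e}\Theta$. A sequence $y_1,\dots,y_n$ in $A$ is Koszul regular if the Koszul complex $K_\bullet(y_1,\ldots,y_n;A)$ has homology only in degree $0$. For $J=\{j_1<\cdots<j_k\}\subseteq\{1,\dots,n\}$ put $\mathbf{e}_J=\mathbf{e}_{j_1}\wedge\cdots\wedge\mathbf{e}_{j_k}$ and $y_J^{p^e-1}=y_{j_1}^{p^e-1}\cdots y_{j_k}^{p^e-1}$ (equal to $1$ if $J=\emptyset$). The Frobenius–Koszul complex $\mathcal{FK}_\bullet(y_1,\ldots,y_n;A)$ has, for $0\le l\le n+1$, $\mathcal{FK}_l$ the free left $A[\Theta;F^e]$-module with basis $\{\mathbf{e}_I:|I|=l\}\cup\{\mathbf{e}_J\wedge u:|J|=l-1\}$, and left $A[\Theta;F^e]$-linear differentials $\partial_l(\mathbf{e}_I)=\sum_{r=1}^l(-1)^{r-1}y_{i_r}\mathbf{e}_{I\setminus\{i_r\}}$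 for $I=\{i_1<\dots<i_l\}$ and $\partial_l(\mathbf{e}_J\wedge u)=(-1)^{l-1}(\Theta-y_J^{p^e-1})\mathbf{e}_J+\sum_{r=1}^{l-1}(-1)^{r-1}y_{j_r}^{p^e}\mathbf{e}_{J\setminus\{j_r\}}\wedge u$ for $J=\{j_1<\dots<j_{l-1}\}$. $A/I_n$ is a left $A[\Theta;F^e]$-module with $\Theta$ acting by $\bar a\mapsto \overline{a^{p^e}}$. *)

theory Defs
  imports Main "HOL-Library.Extended_Nat" "HOL-Computational_Algebra.Primes"
begin

definition is_ideal :: "'a::comm_ring_1 set \<Rightarrow> bool" where
  "is_ideal I \<longleftrightarrow> 0 \<in> I \<and> (\<forall>a\<in>I. \<forall>b\<in>I. a + b \<in> I) \<and> (\<forall>r. \<forall>a\<in>I. r * a \<in> I)"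

definition gen_ideal :: "'a::comm_ring_1 set \<Rightarrow> 'a set" where
  "gen_ideal X = {a. \<exists>F c. finite F \<and> F \<subseteq> X \<and> a = (\<Sum>x\<in>F. c x * x)}"

definition prime_ideal :: "'a::comm_ring_1 set \<Rightarrow> bool" where
  "prime_ideal P \<longleftrightarrow> is_ideal P \<and> 1 \<notin> P \<and> (\<forall>a b. a * b \<in> P \<longrightarrow> a \<in> P \<or> b \<in> P)"

definition noetherian_ring :: "'a::comm_ring_1 itself \<Rightarrow> bool" where
  "noetherian_ring _ \<longleftrightarrow> (\<forall>I::'a set. is_ideal I \<longrightarrow> (\<exists>F. finite F \<and> I = gen_ideal F))"

text \<open>Krull dimension of the localization A_P, via the correspondence between primes of
  A_P and primes of A contained in P: supremum of lengths k of chains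
  Q_0 < Q_1 < ... < Q_k of primes contained in P.\<close>
definition local_dim :: "'a::comm_ring_1 set \<Rightarrow> enat" where
  "local_dim P = Sup {enat k | k. \<exists>Q :: nat \<Rightarrow> 'a set.
      (\<forall>i\<le>k. prime_ideal (Q i) \<and> Q i \<subseteq> P) \<and> (\<forall>i<k. Q i \<subset> Q (Suc i))}"

text \<open>The maximal ideal P A_P of A_P is generated by k elements (written out for
  the localization: the generators may be taken as x_i/1 with x_i in P, and a/1 lies in
  the ideal they generate iff s*a lies in (x_1..x_k) for some s outside P).\<close>
definition local_gens :: "'a::comm_ring_1 set \<Rightarrow> nat \<Rightarrow> bool" where
  "local_gens P k \<longleftrightarrow> (\<exists>x :: nat \<Rightarrow> 'a. (\<forall>i<k. x i \<in> P) \<and>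
      (\<forall>a\<in>P. \<exists>s. s \<notin> P \<and> s * a \<in> gen_ideal (x ` {..<k})))"

text \<open>A_P is a regular local ring: dim A_P = minimal number of generators of P A_P.\<close>
definition regular_at :: "'a::comm_ring_1 set \<Rightarrow> bool" where
  "regular_at P \<longleftrightarrow> local_dim P = enat (LEAST k. local_gens P k)"

definition regular_ring :: "'a::comm_ring_1 itself \<Rightarrow> bool" where
  "regular_ring T \<longleftrightarrow> noetherian_ring T \<and> (\<forall>P::'a set. prime_ideal P \<longrightarrow> regular_at P)"

text \<open>Position sign: for i not in K, (-1)^(r-1) where i is the r-th element of insert i K.\<close>
definition pos :: "nat \<Rightarrow> nat set \<Rightarrow> nat" where
  "pos i K = card {j\<in>K. j < i}"

text \<open>K_l(y;A): free A-module on e_J, J subset of {1..n}, |J| = l; element = coefficient function.\<close>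
definition kz_chains :: "nat \<Rightarrow> nat \<Rightarrow> (nat set \<Rightarrow> 'a::comm_ring_1) set" where
  "kz_chains n l = {f. \<forall>J. f J \<noteq> 0 \<longrightarrow> J \<subseteq> {1..n} \<and> card J = l}"

definition kz_d :: "(nat \<Rightarrow> 'a::comm_ring_1) \<Rightarrow> nat \<Rightarrow> (nat set \<Rightarrow> 'a) \<Rightarrow> nat set \<Rightarrow> 'a" where
  "kz_d y n f J = (if J \<subseteq> {1..n}
      then (\<Sum>i\<in>{1..n} - J. (-1) ^ pos i J * y i * f (insert i J)) else 0)"

definition koszul_regular :: "(nat \<Rightarrow> 'a::comm_ring_1) \<Rightarrow> nat \<Rightarrow> bool" where
  "koszul_regular y n \<longleftrightarrow> (\<forall>l\<ge>1. \<forall>f\<in>kz_chains n l. kz_d y n f = (\<lambda>_. 0) \<longrightarrow>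
      (\<exists>g\<in>kz_chains n (Suc l). f = kz_d y n g))"

text \<open>Basis of FK_l: (I, False) stands for e_I with |I| = l, (J, True) for e_J \<and> u with |J| = l - 1.\<close>
definition fk_basis :: "nat \<Rightarrow> nat \<Rightarrow> (nat set \<times> bool) set" where
  "fk_basis n l = {(I, False) | I. I \<subseteq> {1..n} \<and> card I = l}
                \<union> {(J, True) | J. l \<ge> 1 \<and> J \<subseteq> {1..n} \<and> card J = l - 1}"

text \<open>An element of the free left A[Theta;F^e]-module FK_l is a finite sum of terms
  c(b,m) Theta^m b with b a basis element; c is its finitely supported coefficient function.\<close>
definition fk_chains :: "nat \<Rightarrow> nat \<Rightarrow> ((nat set \<times> bool) \<times> nat \<Rightarrow> 'a::comm_ring_1) set" where
  "fk_chains n l = {c. finite {x. c x \<noteq> 0} \<and> (\<forall>b m. b \<notin> fk_basis n l \<longrightarrow> c (b, m) = 0)}"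

text \<open>The left-linear differential d_l : FK_l -> FK_(l-1), with q = p^e, computed using
  Theta^m a = a^(q^m) Theta^m.  Coefficient of Theta^m b' in d_l(c).\<close>
definition fk_d :: "(nat \<Rightarrow> 'a::comm_ring_1) \<Rightarrow> nat \<Rightarrow> nat \<Rightarrow> nat
     \<Rightarrow> ((nat set \<times> bool) \<times> nat \<Rightarrow> 'a) \<Rightarrow> (nat set \<times> bool) \<times> nat \<Rightarrow> 'a" where
  "fk_d y n q l c x = (case x of ((K, flag), m) \<Rightarrow>
     if (K, flag) \<notin> fk_basis n (l - 1) then 0
     else if \<not> flag then
         (\<Sum>i\<in>{1..n} - K. (-1) ^ pos i K * y i ^ (q ^ m) * c ((insert i K, False), m))
       + (-1) ^ (l - 1) * (if m \<ge> 1 then c ((K, True), m - 1) else 0)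
       - (-1) ^ (l - 1) * (\<Prod>j\<in>K. y j ^ (q - 1)) ^ (q ^ m) * c ((K, True), m)
     else
         (\<Sum>j\<in>{1..n} - K. (-1) ^ pos j K * (y j ^ q) ^ (q ^ m) * c ((insert j K, True), m)))"

text \<open>Augmentation FK_0 = A[Theta;F^e] -> A/I_n, sum a_m Theta^m |-> class of sum a_m
  (Theta acts on A/I_n by Frobenius, so Theta^m . 1 = 1).  Representative in A.\<close>
definition fk_aug :: "((nat set \<times> bool) \<times> nat \<Rightarrow> 'a::comm_ring_1) \<Rightarrow> 'a" where
  "fk_aug c = (\<Sum>x\<in>{x. c x \<noteq> 0}. c x)"

end

theory Submission
  imports Defs
begin


lemma pos_insert:
  assumes "finite K" "i \<notin> K"
  shows "pos j (insert i K) = pos j K + (if i < j then 1 else 0)"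
proof -
  have "{x\<in>insert i K. x < j} = (if i < j then insert i {x\<in>K. x<j} else {x\<in>K. x<j})" by auto
  then show ?thesis using assms unfolding pos_def by auto
qed

lemma kz_d_chains:
  assumes "f \<in> kz_chains n l" "l \<ge> 1"
  shows "kz_d y n f \<in> kz_chains n (l - 1)"
  unfolding kz_chains_def mem_Collect_eq
proof (intro allI impI)
  fix J assume "kz_d y n f J \<noteq> 0"
  then have J: "J \<subseteq> {1..n}" and "(\<Sum>i\<in>{1..n} - J. (-1) ^ pos i J * y i * f (insert i J)) \<noteq> 0"
    unfolding kz_d_def by (auto split: if_splits)
  then obtain i where i: "i \<in> {1..n} - J" "f (insert i J) \<noteq> 0" by (metis (no_types, lifting) mult_zero_right sum.neutral)
  then have "card (insert i J) = l" using assms(1) unfolding kz_chains_def by blast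
  moreover have "finite J" using J finite_subset by blast
  ultimately show "J \<subseteq> {1..n} \<and> card J = l - 1" using J i by auto
qed


lemma neg1_sq: "((-1::'a::comm_ring_1)^k) * (-1)^k = 1"
  by (simp add: power_add[symmetric])

definition offr :: "nat \<Rightarrow> (nat set \<Rightarrow> 'a::comm_ring_1) \<Rightarrow> bool" where
  "offr r x \<longleftrightarrow> (\<forall>K. r \<in> K \<longrightarrow> x K = 0)"
definition supn :: "nat \<Rightarrow> (nat set \<Rightarrow> 'a::comm_ring_1) \<Rightarrow> bool" where
  "supn n x \<longleftrightarrow> (\<forall>K. x K \<noteq> 0 \<longrightarrow> K \<subseteq> {1..n})"
definition cC :: "nat \<Rightarrow> (nat set \<Rightarrow> 'a::comm_ring_1) \<Rightarrow> (nat set \<Rightarrow> 'a) \<Rightarrow> nat set \<Rightarrow> 'a" where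
  "cC r x z K = (if r \<in> K then (-1)^pos r (K - {r}) * z (K - {r}) else x K)"
definition cP :: "nat \<Rightarrow> (nat set \<Rightarrow> 'a::comm_ring_1) \<Rightarrow> nat set \<Rightarrow> 'a" where
  "cP r a K = (if r \<in> K then 0 else a K)"
definition cQ :: "nat \<Rightarrow> (nat set \<Rightarrow> 'a::comm_ring_1) \<Rightarrow> nat set \<Rightarrow> 'a" where
  "cQ r a K = (if r \<in> K then 0 else (-1)^pos r K * a (insert r K))"
definition sS :: "nat \<Rightarrow> 'a \<Rightarrow> (nat set \<Rightarrow> 'a::comm_ring_1) \<Rightarrow> nat set \<Rightarrow> 'a" where
  "sS r g a K = (if r \<in> K then g * a K else a K)"

lemma offr_PQ: "offr r (cP r a)" "offr r (cQ r a)"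
  unfolding offr_def cP_def cQ_def by auto

lemma cC_PQ: "cC r (cP r a) (cQ r a) = a"
proof
  fix K show "cC r (cP r a) (cQ r a) K = a K"
  proof (cases "r \<in> K")
    case True
    then have "insert r (K - {r}) = K" by auto
    then show ?thesis using True unfolding cC_def cP_def cQ_def
      by (simp add: mult.assoc[symmetric] neg1_sq)
  qed (simp add: cC_def cP_def)
qed

lemma PQ_cC:
  assumes "offr r x" "offr r z"
  shows "cP r (cC r x z) = x" "cQ r (cC r x z) = z"
proof -
  show "cP r (cC r x z) = x" using assms unfolding cP_def cC_def offr_def by auto
  show "cQ r (cC r x z) = z"
  proof
    fix K show "cQ r (cC r x z) K = z K"
    proof (cases "r \<in> K")
      case False
      then have "insert r K - {r} = K" by auto
      then show ?thesis using False unfolding cQ_def cC_def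
        by (simp add: mult.assoc[symmetric] neg1_sq)
    qed (use assms in \<open>simp add: cQ_def offr_def\<close>)
  qed
qed

lemma sS_cC: "sS r g (cC r x z) = cC r x (\<lambda>K. g * z K)"
  unfolding sS_def cC_def by (auto simp: fun_eq_iff)

lemma cC_inj:
  assumes "offr r x" "offr r z" "offr r x'" "offr r z'" "cC r x z = cC r x' z'"
  shows "x = x' \<and> z = z'"
proof -
  have "cP r (cC r x z) = cP r (cC r x' z')" "cQ r (cC r x z) = cQ r (cC r x' z')" using assms(5) by simp_all
  then show ?thesis using PQ_cC[OF assms(1,2)] PQ_cC[OF assms(3,4)] by simp
qed

lemma chains_supn: "f \<in> kz_chains n l \<Longrightarrow> supn n f"
  unfolding kz_chains_def supn_def by auto

lemma cP_chains: "a \<in> kz_chains n l \<Longrightarrow> cP r a \<in> kz_chains n l"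
  unfolding kz_chains_def cP_def by auto

lemma cQ_chains:
  assumes "a \<in> kz_chains n l" "r \<in> {1..n}"
  shows "cQ r a \<in> kz_chains n (l - 1)"
  unfolding kz_chains_def mem_Collect_eq
proof (intro allI impI)
  fix K assume "cQ r a K \<noteq> 0"
  then have r: "r \<notin> K" and "a (insert r K) \<noteq> 0" unfolding cQ_def by (auto split: if_splits)
  then have "insert r K \<subseteq> {1..n}" "card (insert r K) = l" using assms(1) unfolding kz_chains_def by auto
  moreover have "finite K" using calculation(1) by (meson finite_atLeastAtMost finite_insert finite_subset)
  ultimately show "K \<subseteq> {1..n} \<and> card K = l - 1" using r by auto
qed

lemma cC_chains:
  assumes "x \<in> kz_chains n l" "z \<in> kz_chains n (l - 1)" "l \<ge> 1" "r \<in> {1..n}"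
  shows "cC r x z \<in> kz_chains n l"
  unfolding kz_chains_def mem_Collect_eq
proof (intro allI impI)
  fix K assume nz: "cC r x z K \<noteq> 0"
  show "K \<subseteq> {1..n} \<and> card K = l"
  proof (cases "r \<in> K")
    case True
    then have "z (K - {r}) \<noteq> 0" using nz unfolding cC_def by auto
    then have "K - {r} \<subseteq> {1..n}" "card (K - {r}) = l - 1" using assms(2) unfolding kz_chains_def by auto
    moreover have "finite (K - {r})" using calculation(1) by (meson finite_atLeastAtMost finite_subset)
    moreover have "K = insert r (K - {r})" using True by auto
    ultimately have "K \<subseteq> {1..n}" "card K = Suc (l - 1)" using assms(4)
      by (metis insert_subset, metis card_insert_disjoint Diff_iff insertI1)
    then show ?thesis using assms(3) by simp
  next
    case False
    then show ?thesis using nz assms(1) unfolding cC_def kz_chains_def by auto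
  qed
qed

lemma offr_kz_d:
  assumes "offr r x"
  shows "offr r (kz_d y n x)"
  using assms unfolding offr_def kz_d_def by auto

lemma kz_d_offr_indep:
  assumes "offr r x" "r \<in> {1..n}"
  shows "kz_d (y(r := h)) n x = kz_d y n x"
proof
  fix K
  show "kz_d (y(r := h)) n x K = kz_d y n x K"
    unfolding kz_d_def
    by (rule if_cong[OF refl sum.cong[OF refl] refl]) (use assms in \<open>auto simp: offr_def\<close>)
qed


lemma kz_d_cC:
  assumes ox: "offr r x" and oz: "offr r z" and sx: "supn n x" and sz: "supn n z" and r: "r \<in> {1..n}"
  shows "kz_d (y(r:=h)) n (cC r x z) = cC r (\<lambda>K. kz_d y n x K + h * z K) (\<lambda>K. - kz_d y n z K)"
proof
  fix K
  show "kz_d (y(r:=h)) n (cC r x z) K = cC r (\<lambda>K. kz_d y n x K + h * z K) (\<lambda>K. - kz_d y n z K) K"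
  proof (cases "r \<in> K")
    case False
    show ?thesis
    proof (cases "K \<subseteq> {1..n}")
      case False2: False
      then have "z K = 0" using sz unfolding supn_def by auto
      then show ?thesis using False False2 unfolding kz_d_def cC_def by simp
    next
      case True
      have fin: "finite ({1..n} - K)" by simp
      have rin: "r \<in> {1..n} - K" using r False by auto
      let ?f = "\<lambda>i. (-1) ^ pos i K * (y(r:=h)) i * cC r x z (insert i K)"
      let ?g = "\<lambda>i. (-1) ^ pos i K * y i * x (insert i K)"
      have "sum ?f ({1..n} - K) = ?f r + sum ?f ({1..n} - K - {r})"
        by (rule sum.remove[OF fin rin])
      also have "?f r = h * z K"
      proof -
        have "insert r K - {r} = K" using False by auto
        then have "?f r = ((-1) ^ pos r K * (-1) ^ pos r K) * h * z K" unfolding cC_def by (simp add: ac_simps)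
        then show ?thesis by (simp add: neg1_sq)
      qed
      also have "sum ?f ({1..n} - K - {r}) = sum ?g ({1..n} - K - {r})"
        by (rule sum.cong) (use False in \<open>auto simp: cC_def\<close>)
      also have "sum ?g ({1..n} - K - {r}) = sum ?g ({1..n} - K)"
      proof -
        have "?g r = 0" using ox unfolding offr_def by simp
        then show ?thesis using sum.remove[OF fin rin, of ?g] by simp
      qed
      finally show ?thesis using True False unfolding kz_d_def cC_def by (simp add: add.commute)
    qed
  next
    case True
    define K' where "K' = K - {r}"
    have KK: "K = insert r K'" "r \<notin> K'" using True K'_def by auto
    show ?thesis
    proof (cases "K' \<subseteq> {1..n}")
      case False
      then have "\<not> K \<subseteq> {1..n}" using KK by auto
      then show ?thesis using False True unfolding kz_d_def cC_def K'_def by simp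
    next
      case Ksub: True
      then have sub: "K \<subseteq> {1..n}" using KK r by auto
      have finK': "finite K'" using Ksub finite_subset by blast
      have fin: "finite ({1..n} - K')" by simp
      have rin: "r \<in> {1..n} - K'" using r KK by auto
      have eqset: "{1..n} - K' - {r} = {1..n} - K" using KK by auto
      let ?f = "\<lambda>i. (-1) ^ pos i K * (y(r:=h)) i * cC r x z (insert i K)"
      let ?g = "\<lambda>i. (-1) ^ pos i K' * y i * z (insert i K')"
      have "sum ?f ({1..n} - K) = sum (\<lambda>i. - ((-1) ^ pos r K' * ?g i)) ({1..n} - K)"
      proof (rule sum.cong[OF refl])
        fix i assume i: "i \<in> {1..n} - K"
        then have ir: "i \<noteq> r" "i \<notin> K'" using KK by auto
        have ins: "insert i K - {r} = insert i K'" using KK ir by auto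
        have p1: "pos i K = pos i K' + (if r < i then 1 else 0)"
          using pos_insert[OF finK' KK(2)] KK by simp
        have p2: "pos r (insert i K') = pos r K' + (if i < r then 1 else 0)"
          using pos_insert[OF finK' ir(2)] by simp
        have "?f i = (-1) ^ pos i K * (-1) ^ pos r (insert i K') * y i * z (insert i K')"
          using ir ins True unfolding cC_def by (simp add: ac_simps)
        also have "(-1::'a) ^ pos i K * (-1) ^ pos r (insert i K') = - ((-1) ^ pos r K' * (-1) ^ pos i K')"
          using ir(1) unfolding p1 p2 by (auto simp: power_add)
        finally show "?f i = - ((-1) ^ pos r K' * ?g i)" by (simp add: ac_simps)
      qed
      also have "\<dots> = - ((-1) ^ pos r K' * sum ?g ({1..n} - K))"
        by (simp add: sum_negf sum_distrib_left)
      also have "sum ?g ({1..n} - K) = sum ?g ({1..n} - K')"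
      proof -
        have "?g r = 0" using oz unfolding offr_def by simp
        then show ?thesis using sum.remove[OF fin rin, of ?g] eqset by simp
      qed
      finally show ?thesis using sub Ksub True unfolding kz_d_def cC_def K'_def[symmetric] by simp
    qed
  qed
qed


lemma kz_d_lin: "kz_d y n (\<lambda>K. u K + c * s K) = (\<lambda>K. kz_d y n u K + c * kz_d y n s K)"
proof
  fix K
  let ?A = "\<lambda>i. (-1) ^ pos i K * y i"
  have "(\<Sum>i\<in>{1..n} - K. ?A i * (u (insert i K) + c * s (insert i K)))
      = (\<Sum>i\<in>{1..n} - K. ?A i * u (insert i K)) + c * (\<Sum>i\<in>{1..n} - K. ?A i * s (insert i K))"
    by (simp add: distrib_left sum.distrib sum_distrib_left mult.left_commute)
  then show "kz_d y n (\<lambda>K. u K + c * s K) K = kz_d y n u K + c * kz_d y n s K"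
    unfolding kz_d_def by simp
qed

lemma kz_d_smult: "kz_d y n (\<lambda>K. c * s K) = (\<lambda>K. c * kz_d y n s K)"
proof
  fix K
  let ?A = "\<lambda>i. (-1) ^ pos i K * y i"
  have "(\<Sum>i\<in>{1..n} - K. ?A i * (c * s (insert i K)))
      = c * (\<Sum>i\<in>{1..n} - K. ?A i * s (insert i K))"
    by (simp add: sum_distrib_left mult.left_commute)
  then show "kz_d y n (\<lambda>K. c * s K) K = c * kz_d y n s K"
    unfolding kz_d_def by simp
qed

lemma chains_lin: "u \<in> kz_chains n l \<Longrightarrow> s \<in> kz_chains n l \<Longrightarrow> (\<lambda>K. u K + c * s K) \<in> kz_chains n l"
  unfolding kz_chains_def mem_Collect_eq
proof (intro allI impI)
  fix J assume 1: "\<forall>J. u J \<noteq> 0 \<longrightarrow> J \<subseteq> {1..n} \<and> card J = l" and 2: "\<forall>J. s J \<noteq> 0 \<longrightarrow> J \<subseteq> {1..n} \<and> card J = l"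
    and 3: "u J + c * s J \<noteq> 0"
  have "u J \<noteq> 0 \<or> s J \<noteq> 0" using 3 by auto
  then show "J \<subseteq> {1..n} \<and> card J = l" using 1 2 by blast
qed

lemma chains_sS: "a \<in> kz_chains n l \<Longrightarrow> sS r g a \<in> kz_chains n l"
  unfolding kz_chains_def mem_Collect_eq
proof (intro allI impI)
  fix J assume 1: "\<forall>J. a J \<noteq> 0 \<longrightarrow> J \<subseteq> {1..n} \<and> card J = l" and 3: "sS r g a J \<noteq> 0"
  have "a J \<noteq> 0" using 3 unfolding sS_def by (auto split: if_splits)
  then show "J \<subseteq> {1..n} \<and> card J = l" using 1 by blast
qed

lemma offr_lin: "offr r u \<Longrightarrow> offr r s \<Longrightarrow> offr r (\<lambda>K. u K + c * s K)"
  unfolding offr_def by auto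

lemma offr_neg: "offr r u \<Longrightarrow> offr r (\<lambda>K. - u K)"
  unfolding offr_def by auto

lemma offr_zero: "offr r (\<lambda>K. 0)" unfolding offr_def by auto

lemma cC_zero: "cC r (\<lambda>K. 0) (\<lambda>K. 0) = (\<lambda>K. 0)"
  unfolding cC_def by auto

lemma koszul_mult:
  assumes r: "r \<in> {1..n}" and kf: "koszul_regular (y(r:=f)) n" and kg: "koszul_regular (y(r:=g)) n"
  shows "koszul_regular (y(r:=f*g)) n"
  unfolding koszul_regular_def
proof (intro allI impI ballI)
  fix l :: nat and a assume l: "l \<ge> 1" and a: "a \<in> kz_chains n l" and cyc: "kz_d (y(r:=f*g)) n a = (\<lambda>_. 0)"
  let ?L = "kz_d y n"
  define x where "x = cP r a"
  define z where "z = cQ r a"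
  have ox: "offr r x" and oz: "offr r z" using offr_PQ x_def z_def by auto
  have xc: "x \<in> kz_chains n l" using cP_chains[OF a] x_def by simp
  have zc: "z \<in> kz_chains n (l-1)" using cQ_chains[OF a r] z_def by simp
  have aeq: "a = cC r x z" unfolding x_def z_def by (rule cC_PQ[symmetric])
  have "cC r (\<lambda>K. ?L x K + (f*g) * z K) (\<lambda>K. - ?L z K) = kz_d (y(r:=f*g)) n (cC r x z)"
    by (rule kz_d_cC[OF ox oz chains_supn[OF xc] chains_supn[OF zc] r, symmetric])
  also have "\<dots> = cC r (\<lambda>K. 0) (\<lambda>K. 0)" unfolding aeq[symmetric] cyc cC_zero ..
  finally have "cC r (\<lambda>K. ?L x K + (f*g) * z K) (\<lambda>K. - ?L z K) = cC r (\<lambda>K. 0) (\<lambda>K. 0)" .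
  then have e1: "(\<lambda>K. ?L x K + (f*g) * z K) = (\<lambda>K. 0)" and e2: "(\<lambda>K. - ?L z K) = (\<lambda>K. 0)"
    using cC_inj[OF offr_lin[OF offr_kz_d[OF ox] oz] offr_neg[OF offr_kz_d[OF oz]] offr_zero offr_zero]
    by blast+
  have Lz: "?L z = (\<lambda>K. 0)" using e2 by (simp add: fun_eq_iff)
  define b where "b = sS r g a"
  have bc: "b \<in> kz_chains n l" unfolding b_def by (rule chains_sS[OF a])
  have ogz: "offr r (\<lambda>K. g * z K)" using offr_lin[OF offr_zero oz, of g] by simp
  have gzc: "(\<lambda>K. g * z K) \<in> kz_chains n (l-1)" using chains_lin[OF _ zc, of "\<lambda>K. 0" g] zc
    unfolding kz_chains_def by simp
  have beq: "b = cC r x (\<lambda>K. g * z K)" unfolding b_def aeq by (rule sS_cC)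
  have "kz_d (y(r:=f)) n b = cC r (\<lambda>K. ?L x K + f * (g * z K)) (\<lambda>K. - ?L (\<lambda>K. g * z K) K)"
    unfolding beq by (rule kz_d_cC[OF ox ogz chains_supn[OF xc] chains_supn[OF gzc] r])
  also have "\<dots> = cC r (\<lambda>K. 0) (\<lambda>K. 0)"
  proof -
    have "\<And>K. ?L x K + f * (g * z K) = 0" using fun_cong[OF e1] by (simp add: mult.assoc)
    moreover have "\<And>K. - ?L (\<lambda>K. g * z K) K = 0" unfolding kz_d_smult Lz by simp
    ultimately show ?thesis by presburger
  qed
  finally have "kz_d (y(r:=f)) n b = (\<lambda>_. 0)" using cC_zero by simp
  then obtain w where wc: "w \<in> kz_chains n (Suc l)" and bw: "b = kz_d (y(r:=f)) n w"
    using kf l bc unfolding koszul_regular_def by blast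
  define u where "u = cP r w"
  define v where "v = cQ r w"
  have ou: "offr r u" and ov: "offr r v" using offr_PQ u_def v_def by auto
  have uc: "u \<in> kz_chains n (Suc l)" using cP_chains[OF wc] u_def by simp
  have vc: "v \<in> kz_chains n l" using cQ_chains[OF wc r] v_def by simp
  have weq: "w = cC r u v" unfolding u_def v_def by (rule cC_PQ[symmetric])
  have "cC r x (\<lambda>K. g * z K) = cC r (\<lambda>K. ?L u K + f * v K) (\<lambda>K. - ?L v K)"
    unfolding beq[symmetric] bw weq by (rule kz_d_cC[OF ou ov chains_supn[OF uc] chains_supn[OF vc] r])
  then have e3: "x = (\<lambda>K. ?L u K + f * v K)" and e4: "(\<lambda>K. g * z K) = (\<lambda>K. - ?L v K)"
    using cC_inj[OF ox ogz offr_lin[OF offr_kz_d[OF ou] ov] offr_neg[OF offr_kz_d[OF ov]]] by blast+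
  define t0 where "t0 = cC r v z"
  have t0c: "t0 \<in> kz_chains n l" using cC_chains[OF vc zc l r] t0_def by simp
  have "kz_d (y(r:=g)) n t0 = cC r (\<lambda>K. ?L v K + g * z K) (\<lambda>K. - ?L z K)"
    unfolding t0_def by (rule kz_d_cC[OF ov oz chains_supn[OF vc] chains_supn[OF zc] r])
  also have "\<dots> = cC r (\<lambda>K. 0) (\<lambda>K. 0)"
  proof -
    have "\<And>K. ?L v K + g * z K = 0" using fun_cong[OF e4] by simp
    moreover have "\<And>K. - ?L z K = 0" using Lz by simp
    ultimately show ?thesis by presburger
  qed
  finally have "kz_d (y(r:=g)) n t0 = (\<lambda>_. 0)" using cC_zero by simp
  then obtain t where tc: "t \<in> kz_chains n (Suc l)" and tt: "t0 = kz_d (y(r:=g)) n t"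
    using kg l t0c unfolding koszul_regular_def by blast
  define s where "s = cP r t"
  define t1 where "t1 = cQ r t"
  have os: "offr r s" and ot1: "offr r t1" using offr_PQ s_def t1_def by auto
  have sc: "s \<in> kz_chains n (Suc l)" using cP_chains[OF tc] s_def by simp
  have t1c: "t1 \<in> kz_chains n l" using cQ_chains[OF tc r] t1_def by simp
  have teq: "t = cC r s t1" unfolding s_def t1_def by (rule cC_PQ[symmetric])
  have "cC r v z = cC r (\<lambda>K. ?L s K + g * t1 K) (\<lambda>K. - ?L t1 K)"
    unfolding t0_def[symmetric] tt teq by (rule kz_d_cC[OF os ot1 chains_supn[OF sc] chains_supn[OF t1c] r])
  then have e5: "v = (\<lambda>K. ?L s K + g * t1 K)" and e6: "z = (\<lambda>K. - ?L t1 K)"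
    using cC_inj[OF ov oz offr_lin[OF offr_kz_d[OF os] ot1] offr_neg[OF offr_kz_d[OF ot1]]] by blast+
  define ans where "ans = cC r (\<lambda>K. u K + f * s K) t1"
  have ansc: "ans \<in> kz_chains n (Suc l)"
    using cC_chains[OF chains_lin[OF uc sc] _ _ r, of t1] t1c ans_def by simp
  have ous: "offr r (\<lambda>K. u K + f * s K)" using offr_lin[OF ou os] .
  have usc: "(\<lambda>K. u K + f * s K) \<in> kz_chains n (Suc l)" using chains_lin[OF uc sc] .
  have "kz_d (y(r:=f*g)) n ans = cC r (\<lambda>K. ?L (\<lambda>K. u K + f * s K) K + (f*g) * t1 K) (\<lambda>K. - ?L t1 K)"
    unfolding ans_def by (rule kz_d_cC[OF ous ot1 chains_supn[OF usc] chains_supn[OF t1c] r])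
  also have "\<dots> = cC r x z"
  proof -
    have X: "(\<lambda>K. ?L (\<lambda>K. u K + f * s K) K + (f*g) * t1 K) = x"
    proof
      fix K
      have "x K = ?L u K + f * (?L s K + g * t1 K)" using fun_cong[OF e3, of K] fun_cong[OF e5, of K] by simp
      then show "?L (\<lambda>K. u K + f * s K) K + (f*g) * t1 K = x K"
        unfolding kz_d_lin by (simp add: distrib_left mult.assoc)
    qed
    show ?thesis unfolding X e6[symmetric] ..
  qed
  finally have "a = kz_d (y(r:=f*g)) n ans" using aeq by simp
  then show "\<exists>w\<in>kz_chains n (Suc l). a = kz_d (y(r:=f*g)) n w" using ansc by blast
qed


lemma kz_d_cong: "(\<And>i. i \<in> {1..n} \<Longrightarrow> y i = y' i) \<Longrightarrow> kz_d y n = kz_d y' n"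
  unfolding kz_d_def by (intro ext if_cong[OF refl sum.cong[OF refl] refl]) auto

lemma koszul_cong: "(\<And>i. i \<in> {1..n} \<Longrightarrow> y i = y' i) \<Longrightarrow> koszul_regular y n = koszul_regular y' n"
  unfolding koszul_regular_def using kz_d_cong[of n y y'] by simp

lemma koszul_pow_single:
  assumes r: "r \<in> {1..n}" and k: "koszul_regular y n" and "k \<ge> 1"
  shows "koszul_regular (y(r := y r ^ k)) n"
  using assms(3)
proof (induction k rule: dec_induct)
  case base then show ?case using k by simp
next
  case (step k)
  have "koszul_regular (y(r := y r ^ k * y r)) n"
    by (rule koszul_mult[OF r step.IH]) (use k in simp)
  moreover have "y r ^ Suc k = y r ^ k * y r" by (simp add: mult.commute)
  ultimately show ?case by (simp only:)
qed

lemma koszul_pow: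
  assumes k: "koszul_regular y n" and N: "N \<ge> 1"
  shows "koszul_regular (\<lambda>i. y i ^ N) n"
proof -
  define yj where "yj j = (\<lambda>i. if i < j then y i ^ N else y i)" for j
  have "koszul_regular (yj j) n" for j
  proof (induction j)
    case 0
    have "yj 0 = y" unfolding yj_def by simp
    then show ?case using k by simp
  next
    case (Suc j)
    have eq: "yj (Suc j) = (yj j)(j := yj j j ^ N)"
      unfolding yj_def by (auto simp: fun_eq_iff)
    show ?case
    proof (cases "j \<in> {1..n}")
      case True
      show ?thesis unfolding eq by (rule koszul_pow_single[OF True Suc.IH N])
    next
      case False
      have "koszul_regular (yj (Suc j)) n = koszul_regular (yj j) n"
        by (rule koszul_cong) (use False in \<open>auto simp: yj_def\<close>)
      then show ?thesis using Suc.IH by simp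
    qed
  qed
  then have "koszul_regular (yj (Suc n)) n" .
  moreover have "koszul_regular (yj (Suc n)) n = koszul_regular (\<lambda>i. y i ^ N) n"
    by (rule koszul_cong) (auto simp: yj_def)
  ultimately show ?thesis by simp
qed


lemma chains_zero_off:
  assumes "f \<in> kz_chains n l" "kz_d y n f K \<noteq> 0"
  shows "K \<subseteq> {1..n} \<and> card K + 1 = l"
proof -
  have J: "K \<subseteq> {1..n}" and "(\<Sum>i\<in>{1..n} - K. (-1) ^ pos i K * y i * f (insert i K)) \<noteq> 0"
    using assms(2) unfolding kz_d_def by (auto split: if_splits)
  then obtain i where i: "i \<in> {1..n} - K" "f (insert i K) \<noteq> 0" by (metis (no_types, lifting) mult_zero_right sum.neutral)
  then have "card (insert i K) = l" using assms(1) unfolding kz_chains_def by blast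
  moreover have "finite K" using J finite_subset by blast
  ultimately show ?thesis using J i by auto
qed

lemma kz_d_lin2: "kz_d y n (\<lambda>K. u K + c * (v K - w K)) = (\<lambda>K. kz_d y n u K + c * (kz_d y n v K - kz_d y n w K))"
proof
  fix K
  let ?A = "\<lambda>i. (-1) ^ pos i K * y i"
  have "(\<Sum>i\<in>{1..n} - K. ?A i * (u (insert i K) + c * (v (insert i K) - w (insert i K))))
      = (\<Sum>i\<in>{1..n} - K. ?A i * u (insert i K)) + c * ((\<Sum>i\<in>{1..n} - K. ?A i * v (insert i K))
         - (\<Sum>i\<in>{1..n} - K. ?A i * w (insert i K)))"
    by (simp add: distrib_left right_diff_distrib sum.distrib sum_subtractf sum_distrib_left mult.left_commute)
  then show "kz_d y n (\<lambda>K. u K + c * (v K - w K)) K = kz_d y n u K + c * (kz_d y n v K - kz_d y n w K)"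
    unfolding kz_d_def by simp
qed

lemma kz_d_zero: "kz_d y n (\<lambda>K. 0) = (\<lambda>K. 0)"
  unfolding kz_d_def by (simp add: fun_eq_iff)

lemma sign_swap:
  assumes "finite K" "i \<notin> K" "j \<notin> K" "i \<noteq> j"
  shows "((-1::'a::comm_ring_1) ^ (pos i K + pos j (insert i K))) = - ((-1) ^ (pos j K + pos i (insert j K)))"
proof -
  have 1: "pos j (insert i K) = pos j K + (if i < j then 1 else 0)" using pos_insert[OF assms(1,2)] .
  have 2: "pos i (insert j K) = pos i K + (if j < i then 1 else 0)" using pos_insert[OF assms(1,3)] .
  show ?thesis using assms(4) unfolding 1 2 by (cases "i < j") (auto simp: power_add)
qed

lemma antisym_sum_zero:
  fixes T :: "nat \<Rightarrow> nat \<Rightarrow> 'a::comm_ring_1"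
  assumes fin: "finite S" and anti: "\<And>i j. i \<in> S \<Longrightarrow> j \<in> S \<Longrightarrow> i \<noteq> j \<Longrightarrow> T i j = - T j i"
  shows "(\<Sum>i\<in>S. \<Sum>j\<in>S - {i}. T i j) = 0"
proof -
  let ?P = "Sigma S (\<lambda>i. S - {i})"
  let ?P1 = "{(i,j). i \<in> S \<and> j \<in> S \<and> i < j}"
  let ?P2 = "{(i,j). i \<in> S \<and> j \<in> S \<and> j < i}"
  have finP: "finite ?P" using fin by auto
  have "(\<Sum>i\<in>S. \<Sum>j\<in>S - {i}. T i j) = (\<Sum>(i,j)\<in>?P. T i j)"
    by (rule sum.Sigma) (use fin in auto)
  also have "?P = ?P1 \<union> ?P2" by auto
  also have "(\<Sum>(i,j)\<in>?P1 \<union> ?P2. T i j) = (\<Sum>(i,j)\<in>?P1. T i j) + (\<Sum>(i,j)\<in>?P2. T i j)"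
  proof (rule sum.union_disjoint)
    show "finite ?P1" by (rule finite_subset[of _ "S \<times> S"]) (use fin in auto)
    show "finite ?P2" by (rule finite_subset[of _ "S \<times> S"]) (use fin in auto)
  qed auto
  also have "?P2 = (\<lambda>(i,j). (j,i)) ` ?P1"
  proof
    show "?P2 \<subseteq> (\<lambda>(i,j). (j,i)) ` ?P1"
    proof
      fix x assume "x \<in> ?P2"
      then obtain i j where x: "x = (i,j)" "i \<in> S" "j \<in> S" "j < i" by auto
      show "x \<in> (\<lambda>(i,j). (j,i)) ` ?P1" by (rule image_eqI[of _ _ "(j,i)"]) (use x in auto)
    qed
  qed auto
  also have "(\<Sum>(i,j)\<in>(\<lambda>(i,j). (j,i)) ` ?P1. T i j) = (\<Sum>(i,j)\<in>?P1. T j i)"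
  proof -
    have "inj_on (\<lambda>(i,j). (j,i)) ?P1" by (auto simp: inj_on_def)
    then have "(\<Sum>x\<in>(\<lambda>(i,j). (j,i)) ` ?P1. (\<lambda>(i,j). T i j) x) = (\<Sum>x\<in>?P1. ((\<lambda>(i,j). T i j) \<circ> (\<lambda>(i,j). (j,i))) x)"
      by (rule sum.reindex)
    moreover have "((\<lambda>(i,j). T i j) \<circ> (\<lambda>(i,j). (j,i))) = (\<lambda>(i,j). T j i)" by (simp add: fun_eq_iff)
    ultimately show ?thesis by simp
  qed
  also have "(\<Sum>(i,j)\<in>?P1. T j i) = (\<Sum>(i,j)\<in>?P1. - T i j)"
  proof (rule sum.cong[OF refl])
    fix x assume "x \<in> ?P1"
    then obtain i j where x: "x = (i,j)" "i \<in> S" "j \<in> S" "i < j" by auto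
    have "T j i = - T i j" using anti[of j i] x by simp
    then show "(\<lambda>(i,j). T j i) x = (\<lambda>(i,j). - T i j) x" using x by simp
  qed
  also have "(\<Sum>(i,j)\<in>?P1. - T i j) = - (\<Sum>(i,j)\<in>?P1. T i j)"
    unfolding sum_negf[symmetric] by (rule sum.cong) auto
  finally show ?thesis by simp
qed

lemma kz_dd: "kz_d y n (kz_d y n f) = (\<lambda>K. 0)"
proof
  fix K
  show "kz_d y n (kz_d y n f) K = 0"
  proof (cases "K \<subseteq> {1..n}")
    case False then show ?thesis unfolding kz_d_def by simp
  next
    case True
    have finK: "finite K" using True finite_subset by blast
    let ?S = "{1..n} - K"
    let ?T = "\<lambda>i j. ((-1) ^ (pos i K + pos j (insert i K))) * (y i * y j) * f (insert j (insert i K))"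
    have "kz_d y n (kz_d y n f) K = (\<Sum>i\<in>?S. \<Sum>j\<in>?S - {i}. ?T i j)"
    proof -
      have "kz_d y n (kz_d y n f) K = (\<Sum>i\<in>?S. (-1) ^ pos i K * y i * kz_d y n f (insert i K))"
        using True unfolding kz_d_def[of y n "kz_d y n f"] by simp
      also have "\<dots> = (\<Sum>i\<in>?S. \<Sum>j\<in>?S - {i}. ?T i j)"
      proof (rule sum.cong[OF refl])
        fix i assume i: "i \<in> ?S"
        then have sub: "insert i K \<subseteq> {1..n}" using True by auto
        have eqS: "{1..n} - insert i K = ?S - {i}" by auto
        have "kz_d y n f (insert i K) = (\<Sum>j\<in>?S - {i}. (-1) ^ pos j (insert i K) * y j * f (insert j (insert i K)))"
          using sub eqS unfolding kz_d_def by simp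
        then show "(-1) ^ pos i K * y i * kz_d y n f (insert i K) = (\<Sum>j\<in>?S - {i}. ?T i j)"
          by (simp add: sum_distrib_left power_add ac_simps)
      qed
      finally show ?thesis .
    qed
    also have "\<dots> = 0"
    proof (rule antisym_sum_zero)
      fix i j assume ij: "i \<in> ?S" "j \<in> ?S" "i \<noteq> j"
      have e: "insert j (insert i K) = insert i (insert j K)" by auto
      have s: "((-1::'a) ^ (pos i K + pos j (insert i K))) = - ((-1) ^ (pos j K + pos i (insert j K)))"
        using sign_swap[OF finK, of i j] ij by auto
      show "?T i j = - ?T j i" unfolding e s by (simp only: mult.commute[of "y i" "y j"] minus_mult_left)
    qed simp
    finally show ?thesis .
  qed
qed


definition fA :: "((nat set \<times> bool) \<times> nat \<Rightarrow> 'a::comm_ring_1) \<Rightarrow> nat \<Rightarrow> nat set \<Rightarrow> 'a" where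
  "fA c m = (\<lambda>K. c ((K, False), m))"
definition fB :: "((nat set \<times> bool) \<times> nat \<Rightarrow> 'a::comm_ring_1) \<Rightarrow> nat \<Rightarrow> nat set \<Rightarrow> 'a" where
  "fB c m = (\<lambda>K. c ((K, True), m))"
definition Yp :: "(nat \<Rightarrow> 'a::comm_ring_1) \<Rightarrow> nat \<Rightarrow> nat \<Rightarrow> 'a" where
  "Yp y N = (\<lambda>i. y i ^ N)"
definition PP :: "(nat \<Rightarrow> 'a::comm_ring_1) \<Rightarrow> nat \<Rightarrow> nat \<Rightarrow> nat set \<Rightarrow> 'a" where
  "PP y q m K = (\<Prod>j\<in>K. y j ^ (q - 1)) ^ (q ^ m)"
definition prevB :: "(nat \<Rightarrow> nat set \<Rightarrow> 'a::comm_ring_1) \<Rightarrow> nat \<Rightarrow> nat set \<Rightarrow> 'a" where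
  "prevB b m = (if m \<ge> 1 then b (m - 1) else (\<lambda>K. 0))"
definition fmk :: "(nat \<Rightarrow> nat set \<Rightarrow> 'a::comm_ring_1) \<Rightarrow> (nat \<Rightarrow> nat set \<Rightarrow> 'a) \<Rightarrow> (nat set \<times> bool) \<times> nat \<Rightarrow> 'a" where
  "fmk a b x = (case x of ((K, flag), m) \<Rightarrow> if flag then b m K else a m K)"

lemma fkb_False: "((K, False) \<in> fk_basis n l) = (K \<subseteq> {1..n} \<and> card K = l)"
  unfolding fk_basis_def by auto
lemma fkb_True: "((K, True) \<in> fk_basis n l) = (l \<ge> 1 \<and> K \<subseteq> {1..n} \<and> card K = l - 1)"
  unfolding fk_basis_def by auto

lemma fA_fmk[simp]: "fA (fmk a b) m = a m" unfolding fA_def fmk_def by simp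
lemma fB_fmk[simp]: "fB (fmk a b) m = b m" unfolding fB_def fmk_def by simp

lemma fmk_parts: "fmk (fA c) (fB c) = c"
proof
  fix x :: "(nat set \<times> bool) \<times> nat"
  obtain K flag m where x: "x = ((K, flag), m)" by (metis prod.collapse)
  show "fmk (fA c) (fB c) x = c x" unfolding x fmk_def fA_def fB_def by (cases flag) auto
qed

lemma fk_ext:
  assumes "\<And>m. fA c m = fA c' m" "\<And>m. fB c m = fB c' m"
  shows "c = c'"
proof -
  have "fA c = fA c'" "fB c = fB c'" using assms by (auto intro: ext)
  then show ?thesis using fmk_parts[of c] fmk_parts[of c'] by metis
qed

lemma fA_chains:
  assumes "c \<in> fk_chains n l" shows "fA c m \<in> kz_chains n l"
  unfolding kz_chains_def mem_Collect_eq
proof (intro allI impI)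
  fix J assume "fA c m J \<noteq> 0"
  then have "(J, False) \<in> fk_basis n l" using assms unfolding fk_chains_def fA_def by blast
  then show "J \<subseteq> {1..n} \<and> card J = l" unfolding fkb_False .
qed

lemma fB_chains:
  assumes "c \<in> fk_chains n l" shows "fB c m \<in> kz_chains n (l - 1)"
  unfolding kz_chains_def mem_Collect_eq
proof (intro allI impI)
  fix J assume "fB c m J \<noteq> 0"
  then have "(J, True) \<in> fk_basis n l" using assms unfolding fk_chains_def fB_def by blast
  then show "J \<subseteq> {1..n} \<and> card J = l - 1" unfolding fkb_True by blast
qed

lemma fB_zero0:
  assumes "c \<in> fk_chains n 0" shows "fB c m = (\<lambda>K. 0)"
proof
  fix K
  have "(K, True) \<notin> fk_basis n 0" unfolding fkb_True by simp
  then show "fB c m K = 0" using assms unfolding fk_chains_def fB_def by blast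
qed

lemma fk_bound:
  assumes "c \<in> fk_chains n l"
  shows "\<exists>M. \<forall>m\<ge>M. fA c m = (\<lambda>K. 0) \<and> fB c m = (\<lambda>K. 0)"
proof -
  have "finite {x. c x \<noteq> 0}" using assms unfolding fk_chains_def by blast
  then have "finite (snd ` {x. c x \<noteq> 0})" by blast
  then obtain M where M: "snd ` {x. c x \<noteq> 0} \<subseteq> {..<M}" using finite_nat_bounded by blast
  have "c ((K, flag), m) = 0" if "m \<ge> M" for K flag m
  proof (rule ccontr)
    assume "c ((K, flag), m) \<noteq> 0"
    then have "m \<in> snd ` {x. c x \<noteq> 0}" by (metis (mono_tags, lifting) imageI mem_Collect_eq snd_conv)
    then show False using M that by auto
  qed
  then show ?thesis unfolding fA_def fB_def by (auto simp: fun_eq_iff)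
qed

lemma fmk_chains:
  assumes a: "\<And>m. a m \<in> kz_chains n l" and b: "\<And>m. b m \<in> kz_chains n (l - 1)"
    and l0: "l = 0 \<Longrightarrow> (\<forall>m. b m = (\<lambda>K. 0))"
    and M: "\<And>m. m \<ge> M \<Longrightarrow> a m = (\<lambda>K. 0) \<and> b m = (\<lambda>K. 0)"
  shows "fmk a b \<in> fk_chains n l"
  unfolding fk_chains_def mem_Collect_eq
proof
  have "{x. fmk a b x \<noteq> 0} \<subseteq> (Pow {1..n} \<times> UNIV) \<times> {..<M}"
  proof
    fix x assume x: "x \<in> {x. fmk a b x \<noteq> 0}"
    obtain K flag m where xx: "x = ((K, flag), m)" by (metis prod.collapse)
    show "x \<in> (Pow {1..n} \<times> UNIV) \<times> {..<M}"
    proof (cases flag)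
      case True
      then have nz: "b m K \<noteq> 0" using x xx unfolding fmk_def by simp
      then have "K \<subseteq> {1..n}" using b[of m] unfolding kz_chains_def by blast
      moreover have "m < M" using nz M[of m] by (cases "m \<ge> M") auto
      ultimately show ?thesis using xx by auto
    next
      case False
      then have nz: "a m K \<noteq> 0" using x xx unfolding fmk_def by simp
      then have "K \<subseteq> {1..n}" using a[of m] unfolding kz_chains_def by blast
      moreover have "m < M" using nz M[of m] by (cases "m \<ge> M") auto
      ultimately show ?thesis using xx by auto
    qed
  qed
  then show "finite {x. fmk a b x \<noteq> 0}" by (rule finite_subset) auto
next
  show "\<forall>bb m. bb \<notin> fk_basis n l \<longrightarrow> fmk a b (bb, m) = 0"
  proof (intro allI impI)
    fix bb m assume nb: "bb \<notin> fk_basis n l"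
    obtain K flag where bb: "bb = (K, flag)" by (metis prod.collapse)
    show "fmk a b (bb, m) = 0"
    proof (cases flag)
      case True
      show ?thesis
      proof (rule ccontr)
        assume "fmk a b (bb, m) \<noteq> 0"
        then have nz: "b m K \<noteq> 0" using True bb unfolding fmk_def by simp
        then have "K \<subseteq> {1..n} \<and> card K = l - 1" using b[of m] unfolding kz_chains_def by blast
        moreover have "l \<ge> 1" using l0 nz by (cases l) auto
        ultimately have "(K, True) \<in> fk_basis n l" unfolding fkb_True by blast
        then show False using nb bb True by simp
      qed
    next
      case False
      show ?thesis
      proof (rule ccontr)
        assume "fmk a b (bb, m) \<noteq> 0"
        then have nz: "a m K \<noteq> 0" using False bb unfolding fmk_def by simp
        then have "K \<subseteq> {1..n} \<and> card K = l" using a[of m] unfolding kz_chains_def by blast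
        then have "(K, False) \<in> fk_basis n l" unfolding fkb_False by blast
        then show False using nb bb False by simp
      qed
    qed
  qed
qed


lemma fd_A:
  assumes c: "c \<in> fk_chains n l" and l: "l \<ge> 1"
  shows "fA (fk_d y n q l c) m = (\<lambda>K. kz_d (Yp y (q^m)) n (fA c m) K
            + (-1)^(l-1) * (prevB (fB c) m K - PP y q m K * fB c m K))"
proof
  fix K
  show "fA (fk_d y n q l c) m K = kz_d (Yp y (q^m)) n (fA c m) K
            + (-1)^(l-1) * (prevB (fB c) m K - PP y q m K * fB c m K)"
  proof (cases "(K, False) \<in> fk_basis n (l - 1)")
    case True
    then have K: "K \<subseteq> {1..n}" unfolding fkb_False by blast
    have kz: "kz_d (Yp y (q^m)) n (fA c m) K
        = (\<Sum>i\<in>{1..n} - K. (-1) ^ pos i K * y i ^ (q ^ m) * c ((insert i K, False), m))"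
      using K unfolding kz_d_def Yp_def fA_def by simp
    have pv: "prevB (fB c) m K = (if m \<ge> 1 then c ((K, True), m - 1) else 0)"
      unfolding prevB_def fB_def by simp
    have "fA (fk_d y n q l c) m K =
        (\<Sum>i\<in>{1..n} - K. (-1) ^ pos i K * y i ^ (q ^ m) * c ((insert i K, False), m))
       + (-1) ^ (l - 1) * (if m \<ge> 1 then c ((K, True), m - 1) else 0)
       - (-1) ^ (l - 1) * (\<Prod>j\<in>K. y j ^ (q - 1)) ^ (q ^ m) * c ((K, True), m)"
      using True unfolding fA_def fk_d_def by simp
    then show ?thesis unfolding kz pv PP_def fB_def by (simp add: right_diff_distrib mult.assoc)
  next
    case False
    have lhs: "fA (fk_d y n q l c) m K = 0" using False unfolding fA_def fk_d_def by simp
    have k0: "kz_d (Yp y (q^m)) n (fA c m) K = 0"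
    proof (rule ccontr)
      assume "kz_d (Yp y (q^m)) n (fA c m) K \<noteq> 0"
      then have "K \<subseteq> {1..n} \<and> card K + 1 = l" using chains_zero_off[OF fA_chains[OF c]] by blast
      then show False using False unfolding fkb_False by auto
    qed
    have b0: "fB c m' K = 0" for m'
    proof (rule ccontr)
      assume "fB c m' K \<noteq> 0"
      then have "K \<subseteq> {1..n} \<and> card K = l - 1" using fB_chains[OF c, of m'] unfolding kz_chains_def by blast
      then show False using False unfolding fkb_False by auto
    qed
    have "prevB (fB c) m K = 0" unfolding prevB_def using b0 by simp
    then show ?thesis using lhs k0 b0 by simp
  qed
qed

lemma fd_B:
  assumes c: "c \<in> fk_chains n l" and l: "l \<ge> 1"
  shows "fB (fk_d y n q l c) m = kz_d (Yp y (q ^ Suc m)) n (fB c m)"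
proof
  fix K
  show "fB (fk_d y n q l c) m K = kz_d (Yp y (q ^ Suc m)) n (fB c m) K"
  proof (cases "(K, True) \<in> fk_basis n (l - 1)")
    case True
    then have K: "K \<subseteq> {1..n}" unfolding fkb_True by blast
    have pw: "(y j ^ q) ^ (q ^ m) = y j ^ (q ^ Suc m)" for j
      by (simp add: power_mult[symmetric])
    have "fB (fk_d y n q l c) m K =
        (\<Sum>j\<in>{1..n} - K. (-1) ^ pos j K * (y j ^ q) ^ (q ^ m) * c ((insert j K, True), m))"
      using True unfolding fB_def fk_d_def by simp
    then show ?thesis using K unfolding kz_d_def Yp_def fB_def pw by simp
  next
    case False
    have lhs: "fB (fk_d y n q l c) m K = 0" using False unfolding fB_def fk_d_def by simp
    have "kz_d (Yp y (q ^ Suc m)) n (fB c m) K = 0"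
    proof (rule ccontr)
      assume "kz_d (Yp y (q ^ Suc m)) n (fB c m) K \<noteq> 0"
      then have "K \<subseteq> {1..n} \<and> card K + 1 = l - 1" using chains_zero_off[OF fB_chains[OF c]] by blast
      then show False using False unfolding fkb_True by auto
    qed
    then show ?thesis using lhs by simp
  qed
qed

lemma fk_d_chains:
  assumes c: "c \<in> fk_chains n l" and l: "l \<ge> 1"
  shows "fk_d y n q l c \<in> fk_chains n (l - 1)"
proof -
  let ?d = "fk_d y n q l c"
  obtain M where M: "\<And>m. m \<ge> M \<Longrightarrow> fA c m = (\<lambda>K. 0) \<and> fB c m = (\<lambda>K. 0)" using fk_bound[OF c] by blast
  have "fmk (fA ?d) (fB ?d) \<in> fk_chains n (l - 1)"
  proof (rule fmk_chains[where M="Suc M"])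
    fix m show "fA ?d m \<in> kz_chains n (l - 1)"
      unfolding kz_chains_def mem_Collect_eq
    proof (intro allI impI)
      fix K assume "fA ?d m K \<noteq> 0"
      then have "(K, False) \<in> fk_basis n (l - 1)" unfolding fA_def fk_d_def by (auto split: if_splits)
      then show "K \<subseteq> {1..n} \<and> card K = l - 1" unfolding fkb_False .
    qed
  next
    fix m show "fB ?d m \<in> kz_chains n (l - 1 - 1)"
      unfolding kz_chains_def mem_Collect_eq
    proof (intro allI impI)
      fix K assume "fB ?d m K \<noteq> 0"
      then have "(K, True) \<in> fk_basis n (l - 1)" unfolding fB_def fk_d_def by (auto split: if_splits)
      then show "K \<subseteq> {1..n} \<and> card K = l - 1 - 1" unfolding fkb_True by blast
    qed
  next
    assume l0: "l - 1 = 0"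
    show "\<forall>m. fB ?d m = (\<lambda>K. 0)"
    proof (intro allI ext)
      fix m K
      have "(K, True) \<notin> fk_basis n (l - 1)" using l0 unfolding fkb_True by simp
      then show "fB ?d m K = 0" unfolding fB_def fk_d_def by simp
    qed
  next
    fix m assume m: "Suc M \<le> m"
    have z1: "fA c m = (\<lambda>K. 0)" "fB c m = (\<lambda>K. 0)" "fB c (m - 1) = (\<lambda>K. 0)" using M m by auto
    have "prevB (fB c) m = (\<lambda>K. 0)" unfolding prevB_def using z1 by simp
    then show "fA ?d m = (\<lambda>K. 0) \<and> fB ?d m = (\<lambda>K. 0)"
      unfolding fd_A[OF c l] fd_B[OF c l] z1 kz_d_zero by simp
  qed
  then show ?thesis unfolding fmk_parts .
qed

lemma PP_insert:
  assumes "finite K" "i \<notin> K"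
  shows "PP y q m (insert i K) = y i ^ ((q - 1) * q ^ m) * PP y q m K"
  using assms unfolding PP_def by (simp add: power_mult_distrib power_mult)

lemma kz_d_PP:
  assumes q: "q \<ge> 1"
  shows "kz_d (Yp y (q^m)) n (\<lambda>K. PP y q m K * f K) = (\<lambda>K. PP y q m K * kz_d (Yp y (q ^ Suc m)) n f K)"
proof
  fix K
  show "kz_d (Yp y (q^m)) n (\<lambda>K. PP y q m K * f K) K = PP y q m K * kz_d (Yp y (q ^ Suc m)) n f K"
  proof (cases "K \<subseteq> {1..n}")
    case False then show ?thesis unfolding kz_d_def by simp
  next
    case True
    then have finK: "finite K" using finite_subset by blast
    have ex: "q ^ m + (q - 1) * q ^ m = q ^ Suc m"
    proof -
      have "q ^ m + (q - 1) * q ^ m = (1 + (q - 1)) * q ^ m" by (simp only: distrib_right mult_1)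
      also have "1 + (q - 1) = q" using q by simp
      finally show ?thesis by simp
    qed
    have "(\<Sum>i\<in>{1..n} - K. (-1) ^ pos i K * Yp y (q^m) i * (PP y q m (insert i K) * f (insert i K)))
        = (\<Sum>i\<in>{1..n} - K. PP y q m K * ((-1) ^ pos i K * Yp y (q ^ Suc m) i * f (insert i K)))"
    proof (rule sum.cong[OF refl])
      fix i assume "i \<in> {1..n} - K"
      then have PPe: "PP y q m (insert i K) = y i ^ ((q - 1) * q ^ m) * PP y q m K" using PP_insert[OF finK] by auto
      have Y2: "y i ^ (q ^ m) * y i ^ ((q - 1) * q ^ m) = y i ^ (q ^ Suc m)"
        unfolding power_add[symmetric] ex ..
      have "(-1) ^ pos i K * Yp y (q^m) i * (PP y q m (insert i K) * f (insert i K))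
          = (-1) ^ pos i K * (y i ^ (q ^ m) * y i ^ ((q - 1) * q ^ m)) * (PP y q m K * f (insert i K))"
        unfolding Yp_def PPe by (simp only: mult_ac)
      also have "\<dots> = PP y q m K * ((-1) ^ pos i K * Yp y (q ^ Suc m) i * f (insert i K))"
        unfolding Y2 Yp_def by (simp only: mult_ac)
      finally show "(-1) ^ pos i K * Yp y (q^m) i * (PP y q m (insert i K) * f (insert i K))
        = PP y q m K * ((-1) ^ pos i K * Yp y (q ^ Suc m) i * f (insert i K))" .
    qed
    then show ?thesis using True unfolding kz_d_def by (simp add: sum_distrib_left)
  qed
qed


lemma sign_suc: "l \<ge> 1 \<Longrightarrow> ((-1::'a::comm_ring_1) ^ (Suc l - 1)) = - ((-1) ^ (l - 1))"
  by (cases l) auto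

lemma fk_dd:
  assumes c: "c \<in> fk_chains n (Suc l)" and l: "l \<ge> 1" and q: "q \<ge> 1"
  shows "fk_d y n q l (fk_d y n q (Suc l) c) = (\<lambda>_. 0)"
proof (rule fk_ext)
  let ?c1 = "fk_d y n q (Suc l) c"
  have c1c: "?c1 \<in> fk_chains n l" using fk_d_chains[OF c, of y q] by simp
  fix m
  let ?D = "\<lambda>k. kz_d (Yp y (q ^ k)) n"
  show "fB (fk_d y n q l ?c1) m = fB (\<lambda>_. 0) m"
  proof -
    have "fB (fk_d y n q l ?c1) m = ?D (Suc m) (fB ?c1 m)" using fd_B[OF c1c l] .
    also have "fB ?c1 m = ?D (Suc m) (fB c m)" using fd_B[OF c] by simp
    finally show ?thesis unfolding kz_dd fB_def by simp
  qed
  let ?s = "(-1::'a) ^ (l - 1)"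
  let ?X = "?D m (prevB (fB c) m)"
  let ?Y = "\<lambda>K. PP y q m K * ?D (Suc m) (fB c m) K"
  have A1: "fA ?c1 m = (\<lambda>K. ?D m (fA c m) K + (- ?s) * (prevB (fB c) m K - PP y q m K * fB c m K))"
    using fd_A[OF c _, of y q m] unfolding sign_suc[OF l] by simp
  have DA1: "?D m (fA ?c1 m) = (\<lambda>K. (- ?s) * (?X K - ?Y K))"
    unfolding A1 kz_d_lin2 kz_dd kz_d_PP[OF q] by simp
  have pv: "prevB (fB ?c1) m = ?X"
  proof (cases "m \<ge> 1")
    case True
    then have "Suc (m - 1) = m" by simp
    then show ?thesis using True fd_B[OF c, of y q "m - 1"] unfolding prevB_def by simp
  next
    case False then show ?thesis by (simp add: prevB_def kz_d_zero)
  qed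
  have B1: "fB ?c1 m = ?D (Suc m) (fB c m)" using fd_B[OF c] by simp
  show "fA (fk_d y n q l ?c1) m = fA (\<lambda>_. 0) m"
  proof -
    have "fA (fk_d y n q l ?c1) m = (\<lambda>K. ?D m (fA ?c1 m) K + ?s * (prevB (fB ?c1) m K - PP y q m K * fB ?c1 m K))"
      using fd_A[OF c1c l] .
    also have "\<dots> = (\<lambda>K. (- ?s) * (?X K - ?Y K) + ?s * (?X K - ?Y K))"
      unfolding DA1 pv B1 ..
    also have "\<dots> = (\<lambda>K. 0)" by simp
    finally show ?thesis unfolding fA_def by simp
  qed
qed


lemma cycle_B:
  assumes c: "c \<in> fk_chains n l" and l: "l \<ge> 1" and cyc: "fk_d y n q l c = (\<lambda>_. 0)"
  shows "kz_d (Yp y (q ^ Suc m)) n (fB c m) = (\<lambda>K. 0)"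
  using fd_B[OF c l, of y q m] unfolding cyc by (simp add: fB_def)

lemma cycle_A:
  assumes c: "c \<in> fk_chains n l" and l: "l \<ge> 1" and cyc: "fk_d y n q l c = (\<lambda>_. 0)"
  shows "kz_d (Yp y (q^m)) n (fA c m) K + (-1)^(l-1) * (prevB (fB c) m K - PP y q m K * fB c m K) = 0"
  using fun_cong[OF fd_A[OF c l, of y q m], of K] unfolding cyc by (simp add: fA_def)

lemma Yp_koszul:
  assumes "koszul_regular y n" "N \<ge> 1"
  shows "koszul_regular (Yp y N) n"
  unfolding Yp_def by (rule koszul_pow[OF assms])

lemma qpow_pos: "q \<ge> 1 \<Longrightarrow> q ^ k \<ge> (1::nat)"
  by simp

lemma lift_B_ge2:
  assumes c: "c \<in> fk_chains n l" and l: "l \<ge> 2" and cyc: "fk_d y n q l c = (\<lambda>_. 0)"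
    and k: "koszul_regular y n" and q: "q \<ge> 1"
  shows "\<exists>b'. (\<forall>m. b' m \<in> kz_chains n l) \<and> (\<forall>m. fB c m = kz_d (Yp y (q ^ Suc m)) n (b' m))
          \<and> (\<exists>M. \<forall>m\<ge>M. b' m = (\<lambda>K. 0))"
proof -
  have l1: "l \<ge> 1" using l by simp
  have ex: "\<exists>g\<in>kz_chains n l. fB c m = kz_d (Yp y (q ^ Suc m)) n g" for m
  proof -
    have kr: "koszul_regular (Yp y (q ^ Suc m)) n" using Yp_koszul[OF k] q by simp
    have "fB c m \<in> kz_chains n (l - 1)" by (rule fB_chains[OF c])
    moreover have "l - 1 \<ge> 1" using l by simp
    moreover have "Suc (l - 1) = l" using l by simp
    ultimately show ?thesis using kr cycle_B[OF c l1 cyc, of m] unfolding koszul_regular_def by metis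
  qed
  define b' where "b' m = (if fB c m = (\<lambda>K. 0) then (\<lambda>K. 0)
       else (SOME g. g \<in> kz_chains n l \<and> fB c m = kz_d (Yp y (q ^ Suc m)) n g))" for m
  have P: "b' m \<in> kz_chains n l \<and> fB c m = kz_d (Yp y (q ^ Suc m)) n (b' m)" for m
  proof (cases "fB c m = (\<lambda>K. 0)")
    case True
    then show ?thesis unfolding b'_def by (simp add: kz_d_zero kz_chains_def)
  next
    case False
    then have "b' m = (SOME g. g \<in> kz_chains n l \<and> fB c m = kz_d (Yp y (q ^ Suc m)) n g)"
      unfolding b'_def by simp
    then show ?thesis using someI_ex[OF ex[of m, unfolded Bex_def]] by simp
  qed
  obtain M where M: "\<And>m. m \<ge> M \<Longrightarrow> fA c m = (\<lambda>K. 0) \<and> fB c m = (\<lambda>K. 0)" using fk_bound[OF c] by blast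
  have "\<forall>m\<ge>M. b' m = (\<lambda>K. 0)" unfolding b'_def using M by simp
  then show ?thesis using P by blast
qed


lemma lift_B_1:
  assumes c: "c \<in> fk_chains n 1" and cyc: "fk_d y n q 1 c = (\<lambda>_. 0)" and q: "q \<ge> 1"
  shows "\<exists>b'. (\<forall>m. b' m \<in> kz_chains n 1) \<and> (\<forall>m. fB c m = kz_d (Yp y (q ^ Suc m)) n (b' m))
          \<and> (\<exists>M. \<forall>m\<ge>M. b' m = (\<lambda>K. 0))"
proof -
  define G where "G k = kz_d (Yp y (q^k)) n (fA c k) {}" for k
  define \<beta> where "\<beta> m = fB c m {}" for m
  have i: "fB c m K = 0" if "K \<noteq> {}" for m K
  proof (rule ccontr)
    assume "fB c m K \<noteq> 0"
    then have "K \<subseteq> {1..n} \<and> card K = 0" using fB_chains[OF c, of m] unfolding kz_chains_def by auto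
    then show False using that by (meson card_0_eq finite_atLeastAtMost finite_subset)
  qed
  have ii: "G m + (prevB (fB c) m {} - \<beta> m) = 0" for m
    using cycle_A[OF c _ cyc, of m "{}"] unfolding G_def \<beta>_def by (simp add: PP_def)
  obtain M where M: "\<And>m. m \<ge> M \<Longrightarrow> fA c m = (\<lambda>K. 0) \<and> fB c m = (\<lambda>K. 0)" using fk_bound[OF c] by blast
  have GM: "G m = 0" if "m \<ge> M" for m using M[OF that] unfolding G_def by (simp add: kz_d_zero)
  have iii: "\<beta> m = - (\<Sum>k\<in>{Suc m..<M}. G k)" for m
  proof (cases "m \<ge> M")
    case True
    then show ?thesis using M[OF True] unfolding \<beta>_def by simp
  next
    case False
    then have "m \<le> M" by simp
    then show ?thesis
    proof (induction m rule: inc_induct)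
      case base
      then show ?case using M[of M] unfolding \<beta>_def by simp
    next
      case (step k)
      have rec: "G (Suc k) + (\<beta> k - \<beta> (Suc k)) = 0" using ii[of "Suc k"] unfolding prevB_def \<beta>_def by simp
      have "(\<Sum>k\<in>{Suc k..<M}. G k) = G (Suc k) + (\<Sum>k\<in>{Suc (Suc k)..<M}. G k)"
      proof (cases "Suc k < M")
        case True then show ?thesis by (rule sum.atLeast_Suc_lessThan)
      next
        case False then have "Suc k = M" using step(2) by simp
        then show ?thesis using GM[of "Suc k"] by simp
      qed
      moreover have "\<beta> k = - (G (Suc k) + (\<Sum>k\<in>{Suc (Suc k)..<M}. G k))"
      proof -
        have "G (Suc k) + (\<beta> k + (\<Sum>k\<in>{Suc (Suc k)..<M}. G k)) = 0" using rec step(3) by simp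
        then have "\<beta> k + (G (Suc k) + (\<Sum>k\<in>{Suc (Suc k)..<M}. G k)) = 0" by (simp add: add_ac)
        then show ?thesis by (simp only: eq_neg_iff_add_eq_0)
      qed
      ultimately show ?case by simp
    qed
  qed
  have iv: "G k = (\<Sum>i\<in>{1..n}. y i ^ (q ^ k) * fA c k {i})" for k
    unfolding G_def kz_d_def Yp_def by (simp add: pos_def)
  define b' where "b' m = (\<lambda>K. if K \<subseteq> {1..n} \<and> card K = 1
      then - (\<Sum>k\<in>{Suc m..<M}. y (the_elem K) ^ (q ^ k - q ^ Suc m) * fA c k K) else 0)" for m
  have bc: "b' m \<in> kz_chains n 1" for m unfolding b'_def kz_chains_def by auto
  have bM: "\<forall>m\<ge>M. b' m = (\<lambda>K. 0)" unfolding b'_def by (auto simp: fun_eq_iff)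
  have eq: "fB c m = kz_d (Yp y (q ^ Suc m)) n (b' m)" for m
  proof
    fix K
    show "fB c m K = kz_d (Yp y (q ^ Suc m)) n (b' m) K"
    proof (cases "K = {}")
      case True
      have "kz_d (Yp y (q ^ Suc m)) n (b' m) {} = (\<Sum>i\<in>{1..n}. y i ^ (q ^ Suc m) * b' m {i})"
        unfolding kz_d_def Yp_def by (simp add: pos_def)
      also have "\<dots> = (\<Sum>i\<in>{1..n}. - (\<Sum>k\<in>{Suc m..<M}. y i ^ (q ^ k) * fA c k {i}))"
      proof (rule sum.cong[OF refl])
        fix i assume i: "i \<in> {1..n}"
        have "y i ^ (q ^ Suc m) * (\<Sum>k\<in>{Suc m..<M}. y i ^ (q ^ k - q ^ Suc m) * fA c k {i})
            = (\<Sum>k\<in>{Suc m..<M}. y i ^ (q ^ k) * fA c k {i})"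
          unfolding sum_distrib_left
        proof (rule sum.cong[OF refl])
          fix k assume "k \<in> {Suc m..<M}"
          then have "Suc m \<le> k" by simp
          then have "q ^ Suc m \<le> q ^ k" by (rule power_increasing[OF _ q])
          then have "q ^ Suc m + (q ^ k - q ^ Suc m) = q ^ k" by simp
          then have "y i ^ (q ^ Suc m) * y i ^ (q ^ k - q ^ Suc m) = y i ^ (q ^ k)"
            by (metis power_add)
          then show "y i ^ (q ^ Suc m) * (y i ^ (q ^ k - q ^ Suc m) * fA c k {i}) = y i ^ (q ^ k) * fA c k {i}"
            by (simp add: mult.assoc[symmetric])
        qed
        then show "y i ^ (q ^ Suc m) * b' m {i} = - (\<Sum>k\<in>{Suc m..<M}. y i ^ (q ^ k) * fA c k {i})"
          using i unfolding b'_def by simp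
      qed
      also have "\<dots> = - (\<Sum>k\<in>{Suc m..<M}. G k)"
        unfolding iv sum_negf by (subst sum.swap) simp
      also have "\<dots> = fB c m {}" using iii[of m] unfolding \<beta>_def by simp
      finally show ?thesis using True by simp
    next
      case False
      have "kz_d (Yp y (q ^ Suc m)) n (b' m) K = 0"
      proof (rule ccontr)
        assume "kz_d (Yp y (q ^ Suc m)) n (b' m) K \<noteq> 0"
        then have "K \<subseteq> {1..n} \<and> card K + 1 = 1" using chains_zero_off[OF bc] by blast
        then have "finite K" "card K = 0" using finite_subset by auto
        then show False using False by simp
      qed
      then show ?thesis using i[OF False] by simp
    qed
  qed
  show ?thesis using bc eq bM by blast
qed


lemma chains_lin2: "u \<in> kz_chains n l \<Longrightarrow> v \<in> kz_chains n l \<Longrightarrow> w \<in> kz_chains n l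
   \<Longrightarrow> (\<lambda>K. u K + c * (v K - w K)) \<in> kz_chains n l"
  unfolding kz_chains_def mem_Collect_eq
proof (intro allI impI)
  fix J assume 1: "\<forall>J. u J \<noteq> 0 \<longrightarrow> J \<subseteq> {1..n} \<and> card J = l" and 2: "\<forall>J. v J \<noteq> 0 \<longrightarrow> J \<subseteq> {1..n} \<and> card J = l"
    and 3: "\<forall>J. w J \<noteq> 0 \<longrightarrow> J \<subseteq> {1..n} \<and> card J = l" and 4: "u J + c * (v J - w J) \<noteq> 0"
  have "u J \<noteq> 0 \<or> v J \<noteq> 0 \<or> w J \<noteq> 0" using 4 by auto
  then show "J \<subseteq> {1..n} \<and> card J = l" using 1 2 3 by blast
qed

lemma chains_mulf: "w \<in> kz_chains n l \<Longrightarrow> (\<lambda>K. P K * w K) \<in> kz_chains n l"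
  unfolding kz_chains_def mem_Collect_eq
proof (intro allI impI)
  fix J assume 1: "\<forall>J. w J \<noteq> 0 \<longrightarrow> J \<subseteq> {1..n} \<and> card J = l" and 4: "P J * w J \<noteq> 0"
  have "w J \<noteq> 0" using 4 by auto
  then show "J \<subseteq> {1..n} \<and> card J = l" using 1 by blast
qed

lemma prevB_chains: "(\<And>m. b m \<in> kz_chains n l) \<Longrightarrow> prevB b m \<in> kz_chains n l"
  unfolding prevB_def kz_chains_def by auto

lemma fB_fmk': "fB (fmk a b) = b" by (rule ext) simp

lemma fk_exact:
  assumes l: "l \<ge> 1" and c: "c \<in> fk_chains n l" and cyc: "fk_d y n q l c = (\<lambda>_. 0)"
    and k: "koszul_regular y n" and q: "q \<ge> 1"
  shows "\<exists>c'\<in>fk_chains n (Suc l). c = fk_d y n q (Suc l) c'"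
proof -
  obtain b' where bc: "\<And>m. b' m \<in> kz_chains n l" and beq: "\<And>m. fB c m = kz_d (Yp y (q ^ Suc m)) n (b' m)"
    and bM: "\<exists>M. \<forall>m\<ge>M. b' m = (\<lambda>K. 0)"
  proof (cases "l = 1")
    case True
    show ?thesis using lift_B_1[of c n y q] c cyc q that True by blast
  next
    case False
    then have "l \<ge> 2" using l by simp
    then show ?thesis using lift_B_ge2[OF c _ cyc k q] that by blast
  qed
  obtain M2 where M2: "\<And>m. m \<ge> M2 \<Longrightarrow> b' m = (\<lambda>K. 0)" using bM by blast
  obtain M1 where M1: "\<And>m. m \<ge> M1 \<Longrightarrow> fA c m = (\<lambda>K. 0) \<and> fB c m = (\<lambda>K. 0)" using fk_bound[OF c] by blast
  define s where "s = (-1::'a)^(l-1)"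
  let ?D = "\<lambda>k. kz_d (Yp y (q ^ k)) n"
  define a2 where "a2 m = (\<lambda>K. fA c m K + s * (prevB b' m K - PP y q m K * b' m K))" for m
  have pv: "?D m (prevB b' m) = prevB (fB c) m" for m
  proof (cases "m \<ge> 1")
    case True
    then have "Suc (m - 1) = m" by simp
    then show ?thesis using True beq[of "m - 1"] unfolding prevB_def by simp
  next
    case False then show ?thesis by (simp add: prevB_def kz_d_zero)
  qed
  have Da2: "?D m (a2 m) = (\<lambda>K. 0)" for m
  proof
    fix K
    have "?D m (a2 m) K = ?D m (fA c m) K + s * (prevB (fB c) m K - PP y q m K * fB c m K)"
      unfolding a2_def kz_d_lin2 pv kz_d_PP[OF q] beq[symmetric] ..
    also have "\<dots> = 0" using cycle_A[OF c l cyc] unfolding s_def .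
    finally show "?D m (a2 m) K = 0" .
  qed
  have a2c: "a2 m \<in> kz_chains n l" for m
    unfolding a2_def by (rule chains_lin2[OF fA_chains[OF c] prevB_chains[OF bc] chains_mulf[OF bc]])
  have ex: "\<exists>g\<in>kz_chains n (Suc l). a2 m = ?D m g" for m
  proof -
    have kr: "koszul_regular (Yp y (q ^ m)) n" using Yp_koszul[OF k] q by simp
    then show ?thesis using a2c[of m] Da2[of m] l unfolding koszul_regular_def by blast
  qed
  define a' where "a' m = (if a2 m = (\<lambda>K. 0) then (\<lambda>K. 0)
       else (SOME g. g \<in> kz_chains n (Suc l) \<and> a2 m = ?D m g))" for m
  have P: "a' m \<in> kz_chains n (Suc l) \<and> a2 m = ?D m (a' m)" for m
  proof (cases "a2 m = (\<lambda>K. 0)")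
    case True
    then show ?thesis unfolding a'_def by (simp add: kz_d_zero kz_chains_def)
  next
    case False
    then have "a' m = (SOME g. g \<in> kz_chains n (Suc l) \<and> a2 m = ?D m g)"
      unfolding a'_def by simp
    then show ?thesis using someI_ex[OF ex[of m, unfolded Bex_def]] by simp
  qed
  have aM: "a' m = (\<lambda>K. 0)" if "m \<ge> Suc (M1 + M2)" for m
  proof -
    have "fA c m = (\<lambda>K. 0)" "b' m = (\<lambda>K. 0)" "b' (m - 1) = (\<lambda>K. 0)" using M1 M2 that by auto
    then have "a2 m = (\<lambda>K. 0)" unfolding a2_def prevB_def by simp
    then show ?thesis unfolding a'_def by simp
  qed
  define c' where "c' = fmk a' b'"
  have c'c: "c' \<in> fk_chains n (Suc l)"
    unfolding c'_def
  proof (rule fmk_chains[where M = "Suc (M1 + M2)"])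
    fix m show "a' m \<in> kz_chains n (Suc l)" using P by blast
    show "b' m \<in> kz_chains n (Suc l - 1)" using bc by simp
  next
    fix m assume "Suc (M1 + M2) \<le> m"
    then show "a' m = (\<lambda>K. 0) \<and> b' m = (\<lambda>K. 0)" using aM M2 by simp
  qed simp
  have "c = fk_d y n q (Suc l) c'"
  proof (rule fk_ext)
    fix m
    have "fB (fk_d y n q (Suc l) c') m = ?D (Suc m) (fB c' m)" by (rule fd_B[OF c'c]) simp
    then show "fB c m = fB (fk_d y n q (Suc l) c') m" unfolding c'_def fB_fmk beq by simp
    have sg: "(-1::'a) ^ (Suc l - 1) = - s" unfolding s_def by (rule sign_suc[OF l])
    have "fA (fk_d y n q (Suc l) c') m = (\<lambda>K. ?D m (a' m) K + (- s) * (prevB b' m K - PP y q m K * b' m K))"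
      using fd_A[OF c'c, of y q m] unfolding sg c'_def fA_fmk fB_fmk' by simp
    also have "\<dots> = fA c m" unfolding P[of m, THEN conjunct2, symmetric] a2_def by (simp add: fun_eq_iff)
    finally show "fA c m = fA (fk_d y n q (Suc l) c') m" by simp
  qed
  then show ?thesis using c'c by blast
qed


lemma gi_intro:
  fixes y :: "nat \<Rightarrow> 'a::comm_ring_1" and n :: nat
  shows "(\<Sum>i\<in>{1..n}. t i * y i) \<in> gen_ideal (y ` {1..n})"
proof -
  let ?F = "y ` {1..n}"
  define c where "c x = (\<Sum>i\<in>{i\<in>{1..n}. y i = x}. t i)" for x
  have "(\<Sum>i\<in>{1..n}. t i * y i) = (\<Sum>x\<in>?F. \<Sum>i\<in>{i\<in>{1..n}. y i = x}. t i * y i)"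
    by (rule sum.image_gen) simp
  also have "\<dots> = (\<Sum>x\<in>?F. c x * x)"
    unfolding c_def sum_distrib_right by (rule sum.cong) auto
  finally show ?thesis unfolding gen_ideal_def by blast
qed

lemma gi_elim:
  fixes y :: "nat \<Rightarrow> 'a::comm_ring_1" and n :: nat
  assumes "a \<in> gen_ideal (y ` {1..n})"
  shows "\<exists>t. a = (\<Sum>i\<in>{1..n}. t i * y i)"
proof -
  obtain F c where F: "finite F" "F \<subseteq> y ` {1..n}" and a: "a = (\<Sum>x\<in>F. c x * x)"
    using assms unfolding gen_ideal_def by blast
  define \<iota> where "\<iota> x = (SOME i. i \<in> {1..n} \<and> y i = x)" for x
  have \<iota>: "\<iota> x \<in> {1..n} \<and> y (\<iota> x) = x" if "x \<in> F" for x
  proof -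
    have "\<exists>i. i \<in> {1..n} \<and> y i = x" using F(2) that by (metis image_iff subsetD)
    then show ?thesis unfolding \<iota>_def by (rule someI_ex)
  qed
  have inj: "inj_on \<iota> F" by (metis \<iota> inj_onI)
  define t where "t i = (if i \<in> \<iota> ` F then c (y i) else 0)" for i
  have "(\<Sum>i\<in>{1..n}. t i * y i) = (\<Sum>i\<in>\<iota> ` F. t i * y i)"
  proof (rule sum.mono_neutral_right)
    show "\<iota> ` F \<subseteq> {1..n}" using \<iota> by auto
  qed (auto simp: t_def)
  also have "\<dots> = (\<Sum>x\<in>F. t (\<iota> x) * y (\<iota> x))" by (rule sum.reindex_cong[OF inj refl]) simp
  also have "\<dots> = (\<Sum>x\<in>F. c x * x)" by (rule sum.cong) (use \<iota> in \<open>auto simp: t_def\<close>)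
  finally show ?thesis using a by metis
qed

lemma chains0_K:
  assumes "c \<in> fk_chains n 0" "c ((K, flag), m) \<noteq> 0"
  shows "K = {} \<and> flag = False"
proof -
  have "(K, flag) \<in> fk_basis n 0" using assms unfolding fk_chains_def by blast
  then have "K \<subseteq> {1..n}" "card K = 0" "flag = False" unfolding fk_basis_def by auto
  then show ?thesis using finite_subset by (metis card_0_eq finite_atLeastAtMost)
qed

lemma aug_sum:
  assumes c: "c \<in> fk_chains n 0" and M: "\<And>m. m \<ge> M \<Longrightarrow> fA c m = (\<lambda>K. 0)"
  shows "fk_aug c = (\<Sum>m<M. fA c m {})"
proof -
  let ?T = "(\<lambda>m. (({}, False), m)) ` {..<M}"
  have sub: "{x. c x \<noteq> 0} \<subseteq> ?T"
  proof
    fix x assume x: "x \<in> {x. c x \<noteq> 0}"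
    obtain K flag m where xx: "x = ((K, flag), m)" by (metis prod.collapse)
    have "K = {} \<and> flag = False" using chains0_K[OF c] x xx by auto
    moreover have "m < M"
    proof (rule ccontr)
      assume "\<not> m < M"
      then have "fA c m K = 0" using M by simp
      then show False using x xx calculation unfolding fA_def by simp
    qed
    ultimately show "x \<in> ?T" using xx by auto
  qed
  have "fk_aug c = sum c ?T"
    unfolding fk_aug_def by (rule sum.mono_neutral_left) (use sub in auto)
  also have "\<dots> = (\<Sum>m<M. c (({}, False), m))" by (rule sum.reindex_cong[of "\<lambda>m. (({}, False), m)"]) (auto simp: inj_on_def)
  finally show ?thesis unfolding fA_def .
qed

lemma telescope: "(\<Sum>m<Suc N. prevB b m K - b m K) = - b N K"
  by (induction N) (auto simp: prevB_def)


lemma PP_empty[simp]: "PP y q m {} = 1" unfolding PP_def by simp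

lemma kz_d_empty:
  fixes y :: "nat \<Rightarrow> 'a::comm_ring_1"
  shows "kz_d y n f {} = (\<Sum>i\<in>{1..n}. y i * f {i})"
  unfolding kz_d_def by (simp add: pos_def)

lemma fdA1:
  assumes c: "c \<in> fk_chains n 1"
  shows "fA (fk_d y n q 1 c) m {} = kz_d (Yp y (q^m)) n (fA c m) {} + (prevB (fB c) m {} - fB c m {})"
  using fun_cong[OF fd_A[OF c, of y q m], of "{}"] by simp

lemma deg0_image:
  fixes y :: "nat \<Rightarrow> 'a::comm_ring_1"
  assumes c': "c' \<in> fk_chains n 1" and q: "q \<ge> 1"
  shows "fk_aug (fk_d y n q 1 c') \<in> gen_ideal (y ` {1..n})"
proof -
  let ?c = "fk_d y n q 1 c'"
  have cc: "?c \<in> fk_chains n 0" using fk_d_chains[OF c', of y q] by simp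
  obtain M where M: "\<And>m. m \<ge> M \<Longrightarrow> fA c' m = (\<lambda>K. 0) \<and> fB c' m = (\<lambda>K. 0)" using fk_bound[OF c'] by blast
  have cM: "fA ?c m = (\<lambda>K. 0)" if "m \<ge> Suc M" for m
  proof -
    have z1: "fA c' m = (\<lambda>K. 0)" "fB c' m = (\<lambda>K. 0)" "fB c' (m - 1) = (\<lambda>K. 0)" using M that by auto
    have "prevB (fB c') m = (\<lambda>K. 0)" unfolding prevB_def using z1 by simp
    then show ?thesis unfolding fd_A[OF c' order.refl] z1 kz_d_zero by simp
  qed
  have "fk_aug ?c = (\<Sum>m<Suc M. fA ?c m {})" by (rule aug_sum[OF cc cM])
  also have "\<dots> = (\<Sum>m<Suc M. kz_d (Yp y (q^m)) n (fA c' m) {}) + (\<Sum>m<Suc M. prevB (fB c') m {} - fB c' m {})"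
    unfolding fdA1[OF c'] sum.distrib ..
  also have "(\<Sum>m<Suc M. prevB (fB c') m {} - fB c' m {}) = 0" unfolding telescope using M[of M] by simp
  also have "(\<Sum>m<Suc M. kz_d (Yp y (q^m)) n (fA c' m) {})
      = (\<Sum>i\<in>{1..n}. (\<Sum>m<Suc M. y i ^ (q^m - 1) * fA c' m {i}) * y i)"
  proof -
    have "(\<Sum>m<Suc M. kz_d (Yp y (q^m)) n (fA c' m) {}) = (\<Sum>m<Suc M. \<Sum>i\<in>{1..n}. (y i ^ (q^m - 1) * fA c' m {i}) * y i)"
    proof (rule sum.cong[OF refl])
      fix m
      have "y i ^ (q ^ m) = y i ^ (q ^ m - 1) * y i" for i
      proof -
        have "q ^ m = Suc (q ^ m - 1)" using q by simp
        then show ?thesis by (metis power_Suc2)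
      qed
      then show "kz_d (Yp y (q^m)) n (fA c' m) {} = (\<Sum>i\<in>{1..n}. (y i ^ (q^m - 1) * fA c' m {i}) * y i)"
        unfolding kz_d_empty Yp_def by (simp add: ac_simps)
    qed
    also have "\<dots> = (\<Sum>i\<in>{1..n}. \<Sum>m<Suc M. (y i ^ (q^m - 1) * fA c' m {i}) * y i)" by (rule sum.swap)
    also have "\<dots> = (\<Sum>i\<in>{1..n}. (\<Sum>m<Suc M. y i ^ (q^m - 1) * fA c' m {i}) * y i)"
      by (rule sum.cong[OF refl]) (rule sum_distrib_right[symmetric])
    finally show ?thesis .
  qed
  finally show ?thesis using gi_intro by simp
qed


lemma deg0_pre:
  fixes y :: "nat \<Rightarrow> 'a::comm_ring_1"
  assumes c: "c \<in> fk_chains n 0" and g: "fk_aug c \<in> gen_ideal (y ` {1..n})" and q: "q \<ge> 1"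
  shows "\<exists>c'\<in>fk_chains n 1. c = fk_d y n q 1 c'"
proof -
  obtain t where t: "fk_aug c = (\<Sum>i\<in>{1..n}. t i * y i)" using gi_elim[OF g] by blast
  obtain M where M: "\<And>m. m \<ge> M \<Longrightarrow> fA c m = (\<lambda>K. 0) \<and> fB c m = (\<lambda>K. 0)" using fk_bound[OF c] by blast
  have aug: "fk_aug c = (\<Sum>m<M. fA c m {})" by (rule aug_sum[OF c]) (use M in blast)
  define a' where "a' (m::nat) = (\<lambda>K. if m = 0 \<and> K \<subseteq> {1..n} \<and> card K = 1 then t (the_elem K) else 0)" for m
  define b' where "b' m = (\<lambda>K::nat set. if K = {} then (\<Sum>k\<in>{Suc m..<M}. fA c k {}) else 0)" for m
  have a'c: "a' m \<in> kz_chains n 1" for m unfolding a'_def kz_chains_def by auto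
  have b'c: "b' m \<in> kz_chains n 0" for m unfolding b'_def kz_chains_def by auto
  define c' where "c' = fmk a' b'"
  have c'c: "c' \<in> fk_chains n 1" unfolding c'_def
  proof (rule fmk_chains[where M = "Suc M"])
    fix m show "a' m \<in> kz_chains n 1" by (rule a'c)
    show "b' m \<in> kz_chains n (1 - 1)" using b'c by simp
  next
    fix m assume "Suc M \<le> m"
    then show "a' m = (\<lambda>K. 0) \<and> b' m = (\<lambda>K. 0)" unfolding a'_def b'_def by (auto simp: fun_eq_iff)
  qed simp
  have "c = fk_d y n q 1 c'"
  proof (rule fk_ext)
    fix m
    show "fB c m = fB (fk_d y n q 1 c') m"
    proof -
      have "fB (fk_d y n q 1 c') m = kz_d (Yp y (q ^ Suc m)) n (b' m)"
        using fd_B[OF c'c order.refl, of y q m] unfolding c'_def by simp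
      also have "\<dots> = (\<lambda>K. 0)"
      proof
        fix K show "kz_d (Yp y (q ^ Suc m)) n (b' m) K = 0"
          using chains_zero_off[OF b'c[of m], of "Yp y (q ^ Suc m)" K] by auto
      qed
      finally show ?thesis using fB_zero0[OF c] by simp
    qed
    show "fA c m = fA (fk_d y n q 1 c') m"
    proof
      fix K
      show "fA c m K = fA (fk_d y n q 1 c') m K"
      proof (cases "K = {}")
        case True
        have e1: "fA (fk_d y n q 1 c') m {} = kz_d (Yp y (q^m)) n (a' m) {} + (prevB b' m {} - b' m {})"
          using fdA1[OF c'c, of y q m] unfolding c'_def fA_fmk fB_fmk' by simp
        have Da: "kz_d (Yp y (q^m)) n (a' m) {} = (if m = 0 then (\<Sum>i\<in>{1..n}. t i * y i) else 0)"
        proof -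
          have "kz_d (Yp y (q^m)) n (a' m) {} = (\<Sum>i\<in>{1..n}. Yp y (q^m) i * a' m {i})" by (rule kz_d_empty)
          also have "\<dots> = (\<Sum>i\<in>{1..n}. if m = 0 then t i * y i else 0)"
            by (rule sum.cong[OF refl]) (auto simp: a'_def Yp_def mult.commute)
          finally show ?thesis by simp
        qed
        show ?thesis
        proof (cases "m = 0")
          case m0: True
          have "fA (fk_d y n q 1 c') m {} = (\<Sum>k<M. fA c k {}) - (\<Sum>k\<in>{Suc 0..<M}. fA c k {})"
            using e1 Da m0 t aug unfolding prevB_def b'_def by simp
          also have "\<dots> = fA c 0 {}"
          proof (cases "M = 0")
            case True then show ?thesis using M[of 0] by simp
          next
            case False
            then have "(\<Sum>k\<in>{0..<M}. fA c k {}) = fA c 0 {} + (\<Sum>k\<in>{Suc 0..<M}. fA c k {})"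
              by (intro sum.atLeast_Suc_lessThan) simp
            then show ?thesis by (simp add: lessThan_atLeast0)
          qed
          finally show ?thesis using m0 True by simp
        next
          case m1: False
          then have sm: "Suc (m - 1) = m" by simp
          have "fA (fk_d y n q 1 c') m {} = (\<Sum>k\<in>{m..<M}. fA c k {}) - (\<Sum>k\<in>{Suc m..<M}. fA c k {})"
            using e1 Da m1 sm unfolding prevB_def b'_def by simp
          also have "\<dots> = fA c m {}"
          proof (cases "m < M")
            case True then show ?thesis by (simp add: sum.atLeast_Suc_lessThan)
          next
            case False then show ?thesis using M[of m] by simp
          qed
          finally show ?thesis using True by simp
        qed
      next
        case False
        have l: "fA c m K = 0" using chains0_K[OF c, of K False m] False unfolding fA_def by auto
        have "kz_d (Yp y (q^m)) n (a' m) K = 0"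
        proof (rule ccontr)
          assume "kz_d (Yp y (q^m)) n (a' m) K \<noteq> 0"
          then have "K \<subseteq> {1..n} \<and> card K + 1 = 1" using chains_zero_off[OF a'c] by blast
          then have "finite K" "card K = 0" using finite_subset by auto
          then show False using False by simp
        qed
        moreover have "prevB b' m K = 0" "b' m K = 0" using False unfolding prevB_def b'_def by auto
        ultimately show ?thesis using l fun_cong[OF fd_A[OF c'c order.refl, of y q m], of K]
          unfolding c'_def fA_fmk fB_fmk' by simp
      qed
    qed
  qed
  then show ?thesis using c'c by blast
qed


lemma top_A:
  assumes c: "c \<in> fk_chains n (Suc n)"
  shows "fA c m = (\<lambda>K. 0)"
proof
  fix K show "fA c m K = 0"
  proof (rule ccontr)
    assume "fA c m K \<noteq> 0"
    then have "K \<subseteq> {1..n}" "card K = Suc n" using fA_chains[OF c, of m] unfolding kz_chains_def by auto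
    moreover have "card K \<le> n" using card_mono[OF _ calculation(1)] by simp
    ultimately show False by simp
  qed
qed

lemma top_B:
  assumes c: "c \<in> fk_chains n (Suc n)" and K: "K \<noteq> {1..n}"
  shows "fB c m K = 0"
proof (rule ccontr)
  assume "fB c m K \<noteq> 0"
  then have "K \<subseteq> {1..n}" "card K = n" using fB_chains[OF c, of m] unfolding kz_chains_def by auto
  then have "K = {1..n}" by (intro card_subset_eq) auto
  then show False using K by simp
qed

lemma top_eq:
  assumes c: "c \<in> fk_chains n (Suc n)"
  shows "fA (fk_d y n q (Suc n) c) m {1..n} = (-1)^n * (prevB (fB c) m {1..n} - PP y q m {1..n} * fB c m {1..n})"
  using fun_cong[OF fd_A[OF c, of y q m], of "{1..n}"] unfolding top_A[OF c] kz_d_zero by simp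

lemma inj_top:
  assumes q: "q \<ge> 1"
  shows "inj_on (fk_d y n q (Suc n)) (fk_chains n (Suc n))"
proof (rule inj_onI)
  fix c1 c2 assume c1: "c1 \<in> fk_chains n (Suc n)" and c2: "c2 \<in> fk_chains n (Suc n)"
    and eq: "fk_d y n q (Suc n) c1 = fk_d y n q (Suc n) c2"
  let ?N = "{1..n}"
  define \<delta> where "\<delta> m = fB c1 m ?N - fB c2 m ?N" for m
  have rec: "\<delta> (m - 1) = PP y q m ?N * \<delta> m" if "m \<ge> 1" for m
  proof -
    have "(-1::'a)^n * (prevB (fB c1) m ?N - PP y q m ?N * fB c1 m ?N)
        = (-1)^n * (prevB (fB c2) m ?N - PP y q m ?N * fB c2 m ?N)"
      using top_eq[OF c1, of y q m] top_eq[OF c2, of y q m] eq by simp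
    then have "(-1::'a)^n * (-1)^n * (prevB (fB c1) m ?N - PP y q m ?N * fB c1 m ?N)
        = (-1)^n * (-1)^n * (prevB (fB c2) m ?N - PP y q m ?N * fB c2 m ?N)"
      by (simp only: mult.assoc)
    then have "prevB (fB c1) m ?N - PP y q m ?N * fB c1 m ?N = prevB (fB c2) m ?N - PP y q m ?N * fB c2 m ?N"
      unfolding neg1_sq by simp
    then have "fB c1 (m - 1) ?N - PP y q m ?N * fB c1 m ?N = fB c2 (m - 1) ?N - PP y q m ?N * fB c2 m ?N"
      using that unfolding prevB_def by simp
    then show ?thesis unfolding \<delta>_def by (simp add: right_diff_distrib algebra_simps)
  qed
  obtain M1 where M1: "\<And>m. m \<ge> M1 \<Longrightarrow> fA c1 m = (\<lambda>K. 0) \<and> fB c1 m = (\<lambda>K. 0)" using fk_bound[OF c1] by blast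
  obtain M2 where M2: "\<And>m. m \<ge> M2 \<Longrightarrow> fA c2 m = (\<lambda>K. 0) \<and> fB c2 m = (\<lambda>K. 0)" using fk_bound[OF c2] by blast
  have dz: "\<delta> m = 0" for m
  proof (cases "m \<ge> M1 + M2")
    case True then show ?thesis using M1[of m] M2[of m] unfolding \<delta>_def by simp
  next
    case False
    then have "m \<le> M1 + M2" by simp
    then show ?thesis
    proof (induction m rule: inc_induct)
      case base then show ?case using M1[of "M1 + M2"] M2[of "M1 + M2"] unfolding \<delta>_def by simp
    next
      case (step k)
      show ?case using rec[of "Suc k"] step(3) by simp
    qed
  qed
  show "c1 = c2"
  proof (rule fk_ext)
    fix m
    show "fA c1 m = fA c2 m" using top_A[OF c1] top_A[OF c2] by simp
    show "fB c1 m = fB c2 m"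
    proof
      fix K show "fB c1 m K = fB c2 m K"
      proof (cases "K = ?N")
        case True then show ?thesis using dz[of m] unfolding \<delta>_def by simp
      next
        case False then show ?thesis using top_B[OF c1 False] top_B[OF c2 False] by simp
      qed
    qed
  qed
qed


lemma aug_surj: "\<exists>c\<in>fk_chains n 0. fk_aug c = (a::'a::comm_ring_1)"
proof -
  let ?pt = "(({}::nat set, False), 0::nat)"
  define c where "c x = (if x = ?pt then a else 0)" for x
  have sup: "{x. c x \<noteq> 0} = (if a = 0 then {} else {?pt})" unfolding c_def by auto
  have "c \<in> fk_chains n 0"
    unfolding fk_chains_def mem_Collect_eq
  proof
    show "finite {x. c x \<noteq> 0}" unfolding sup by simp
    have "({}, False) \<in> fk_basis n 0" unfolding fkb_False by simp
    then show "\<forall>b m. b \<notin> fk_basis n 0 \<longrightarrow> c (b, m) = 0" unfolding c_def by auto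
  qed
  moreover have "fk_aug c = a" unfolding fk_aug_def sup by (simp add: c_def)
  ultimately show ?thesis by blast
qed

theorem corollary3:
  fixes y :: "nat \<Rightarrow> 'a::comm_ring_1" and p e n :: nat
  assumes "prime p" and "CHAR('a) = p" and "regular_ring TYPE('a)"
    and "e \<ge> 1" and "koszul_regular y n"
  shows "(\<forall>a::'a. \<exists>c\<in>fk_chains n 0. fk_aug c = a)
    \<and> {c \<in> fk_chains n 0. fk_aug c \<in> gen_ideal (y ` {1..n})} = fk_d y n (p ^ e) 1 ` fk_chains n 1
    \<and> (\<forall>l\<in>{1..n}. {c \<in> fk_chains n l. fk_d y n (p ^ e) l c = (\<lambda>_. 0)}
                    = fk_d y n (p ^ e) (Suc l) ` fk_chains n (Suc l))
    \<and> inj_on (fk_d y n (p ^ e) (Suc n)) (fk_chains n (Suc n))"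
proof -
  have p0: "p > 0" using assms(1) prime_gt_0_nat by blast
  then have q: "p ^ e \<ge> 1" by simp
  have k: "koszul_regular y n" by (rule assms(5))
  have P1: "\<forall>a::'a. \<exists>c\<in>fk_chains n 0. fk_aug c = a" using aug_surj by blast
  have P2: "{c \<in> fk_chains n 0. fk_aug c \<in> gen_ideal (y ` {1..n})} = fk_d y n (p ^ e) 1 ` fk_chains n 1"
  proof
    show "{c \<in> fk_chains n 0. fk_aug c \<in> gen_ideal (y ` {1..n})} \<subseteq> fk_d y n (p ^ e) 1 ` fk_chains n 1"
    proof
      fix c assume "c \<in> {c \<in> fk_chains n 0. fk_aug c \<in> gen_ideal (y ` {1..n})}"
      then have "c \<in> fk_chains n 0" "fk_aug c \<in> gen_ideal (y ` {1..n})" by auto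
      then obtain c' where "c' \<in> fk_chains n 1" "c = fk_d y n (p ^ e) 1 c'" using deg0_pre[OF _ _ q] by blast
      then show "c \<in> fk_d y n (p ^ e) 1 ` fk_chains n 1" by blast
    qed
    show "fk_d y n (p ^ e) 1 ` fk_chains n 1 \<subseteq> {c \<in> fk_chains n 0. fk_aug c \<in> gen_ideal (y ` {1..n})}"
    proof
      fix c assume "c \<in> fk_d y n (p ^ e) 1 ` fk_chains n 1"
      then obtain c' where c': "c' \<in> fk_chains n 1" "c = fk_d y n (p ^ e) 1 c'" by blast
      have "c \<in> fk_chains n 0" using fk_d_chains[OF c'(1), of y "p ^ e"] c'(2) by simp
      moreover have "fk_aug c \<in> gen_ideal (y ` {1..n})" using deg0_image[OF c'(1) q] c'(2) by simp
      ultimately show "c \<in> {c \<in> fk_chains n 0. fk_aug c \<in> gen_ideal (y ` {1..n})}" by blast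
    qed
  qed
  have P3: "\<forall>l\<in>{1..n}. {c \<in> fk_chains n l. fk_d y n (p ^ e) l c = (\<lambda>_. 0)}
                    = fk_d y n (p ^ e) (Suc l) ` fk_chains n (Suc l)"
  proof
    fix l :: nat assume "l \<in> {1..n}"
    then have l: "l \<ge> 1" by simp
    show "{c \<in> fk_chains n l. fk_d y n (p ^ e) l c = (\<lambda>_. 0)} = fk_d y n (p ^ e) (Suc l) ` fk_chains n (Suc l)"
    proof
      show "{c \<in> fk_chains n l. fk_d y n (p ^ e) l c = (\<lambda>_. 0)} \<subseteq> fk_d y n (p ^ e) (Suc l) ` fk_chains n (Suc l)"
      proof
        fix c assume "c \<in> {c \<in> fk_chains n l. fk_d y n (p ^ e) l c = (\<lambda>_. 0)}"
        then have "c \<in> fk_chains n l" "fk_d y n (p ^ e) l c = (\<lambda>_. 0)" by auto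
        then obtain c' where "c' \<in> fk_chains n (Suc l)" "c = fk_d y n (p ^ e) (Suc l) c'"
          using fk_exact[OF l _ _ k q] by blast
        then show "c \<in> fk_d y n (p ^ e) (Suc l) ` fk_chains n (Suc l)" by blast
      qed
      show "fk_d y n (p ^ e) (Suc l) ` fk_chains n (Suc l) \<subseteq> {c \<in> fk_chains n l. fk_d y n (p ^ e) l c = (\<lambda>_. 0)}"
      proof
        fix c assume "c \<in> fk_d y n (p ^ e) (Suc l) ` fk_chains n (Suc l)"
        then obtain c' where c': "c' \<in> fk_chains n (Suc l)" "c = fk_d y n (p ^ e) (Suc l) c'" by blast
        have "c \<in> fk_chains n l" using fk_d_chains[OF c'(1), of y "p ^ e"] c'(2) by simp
        moreover have "fk_d y n (p ^ e) l c = (\<lambda>_. 0)" using fk_dd[OF c'(1) l q] c'(2) by simp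
        ultimately show "c \<in> {c \<in> fk_chains n l. fk_d y n (p ^ e) l c = (\<lambda>_. 0)}" by blast
      qed
    qed
  qed
  have P4: "inj_on (fk_d y n (p ^ e) (Suc n)) (fk_chains n (Suc n))" by (rule inj_top[OF q])
  show ?thesis using P1 P2 P3 P4 by blast
qed


end
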